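(* Let $T$ be a necklace and $a\preccurlyeq b$ vertices of $T$. Then the object $\iota^T_{a,b}:T_{[a,b]}\hookrightarrow T_{a,b}$ is terminal in the category $\mathcal{N}ec/T_{a,b}$.
   Context: Cubical sets: presheaves on the category $\square$ with objects $[1]^n$ and morphisms generated by faces $\partial_{i,\epsilon}$ (insert $\epsilon$ at coordinate $i$), degeneracies (delete a coordinate) and negative connections ($\gamma_{i,0}$ replaces $(x_i,x_{i+1})$ by $\max(x_i,x_{i+1})$); $\square^n$ is representable, with vertices the subsets of $\{1,\dots,n\}$, $\alpha=\emptyset$, $\omega=\{1,\dots,n\}$. For $a\subseteq b$ in $\square^n$, $d(a,b)=|b\setminus a|$ and $\iota^n_{a,b}:\square^{d(a,b)}\hookrightarrow\square^n$ is the (composite of faces) map with $\iota^n_{a,b}(\alpha)=a$, $\iota^n_{a,b}(\omega)=b$, which inserts the coordinates of $a$ and $\{1,\dots,n\}\setminus b$ as constants and the free coordinates in the positions of $b\setminus a$ in increasing order. Necklaces: for double-pointed cubical sets $X_{a,b},Y_{u,v}$, $X\vee Y$ is the pushout identifying $b$ with $u$, pointed by $(a,v)$; for maps $f:S_{a,b}\to X_{u,v}$, $g:S'_{a',b'}\to X_{v,w}$, $f*g:S\vee S'\to X$ is the induced map. A necklace is $T=\square^{n_1}\vee\dots\vee\square^{n_k}$ ($n_i\ge1$) pointed by $\alpha$ of the first and $\omega$ of the last cube, with beads $B_i:\square^{n_i}\to T$. Its vertex set is ordered by $\preccurlyeq$: $x\preccurlyeq y$ iff they lie in a common bead with $x\subseteq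 y$ or $x$ lies in an earlier bead than $y$. $\mathcal{N}ec$ is the full subcategory of double-pointed cubical sets on necklaces. For a cubical set $S$ and vertices $a,b$, $\mathcal{N}ec/S_{a,b}$ has objects maps $f:U\to S$ with $U$ a necklace sending its endpoints to $a,b$, and morphisms the maps $g$ in $\mathcal{N}ec$ with $f'g=f$. Subnecklace: for vertices $a\preccurlyeq b$ of $T$: if $a,b$ lie in the bead $\square^{n_i}$, $T_{[a,b]}=\square^{d(a,b)}$ and $\iota^T_{a,b}=B_i\circ\iota^{n_i}_{a,b}$; if $a\in\square^{n_i}$, $b\in\square^{n_j}$ with $i<j$, $T_{[a,b]}=\square^{d(a,\omega)}\vee\square^{n_{i+1}}\vee\dots\vee\square^{n_{j-1}}\vee\square^{d(\alpha,b)}$ and $\iota^T_{a,b}=(B_i\circ\iota^{n_i}_{a,\omega})*B_{i+1}*\dots*B_{j-1}*(B_j\circ\iota^{n_j}_{\alpha,b})$. *)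

theory Defs
  imports Main
begin

section \<open>The box category (faces, degeneracies, negative connections)\<close>

text \<open>A vertex of [1]^n is a boolean list of length n (coordinate p is True iff p+1 is
  in the corresponding subset of {1..n}). A morphism [1]^m -> [1]^n is represented by its
  action on vertices, made extensional (undefined off lists of length m).\<close>

type_synonym bhom = "bool list \<Rightarrow> bool list"

definition hext :: "nat \<Rightarrow> bhom \<Rightarrow> bhom" where
  "hext m f = (\<lambda>x. if length x = m then f x else undefined)"

inductive box_hom :: "nat \<Rightarrow> nat \<Rightarrow> bhom \<Rightarrow> bool" where
  bh_id: "box_hom n n (hext n id)"
| bh_face: "i \<le> n \<Longrightarrow> box_hom n (Suc n) (hext n (\<lambda>x. take i x @ e # drop i x))"
| bh_degen: "i \<le> n \<Longrightarrow> box_hom (Suc n) n (hext (Suc n) (\<lambda>x. take i x @ drop (Suc i) x))"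
| bh_conn: "i < n \<Longrightarrow>
    box_hom (Suc n) n (hext (Suc n) (\<lambda>x. take i x @ (x ! i \<or> x ! Suc i) # drop (Suc (Suc i)) x))"
| bh_comp: "box_hom m n f \<Longrightarrow> box_hom k m g \<Longrightarrow> box_hom k n (hext k (f \<circ> g))"

text \<open>cells X n = set of n-cubes; act X m n f : X_n -> X_m for f : [1]^m -> [1]^n.\<close>
record 'c cset =
  cells :: "nat \<Rightarrow> 'c set"
  act :: "nat \<Rightarrow> nat \<Rightarrow> bhom \<Rightarrow> 'c \<Rightarrow> 'c"

definition cubical_set :: "'c cset \<Rightarrow> bool" where
  "cubical_set X \<longleftrightarrow>
     (\<forall>m n f x. box_hom m n f \<and> x \<in> cells X n \<longrightarrow> act X m n f x \<in> cells X m) \<and>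
     (\<forall>n x. x \<in> cells X n \<longrightarrow> act X n n (hext n id) x = x) \<and>
     (\<forall>k m n f g x. box_hom m n f \<and> box_hom k m g \<and> x \<in> cells X n \<longrightarrow>
        act X k n (hext k (f \<circ> g)) x = act X k m g (act X m n f x))"

definition cmap :: "'c cset \<Rightarrow> 'd cset \<Rightarrow> (nat \<Rightarrow> 'c \<Rightarrow> 'd) \<Rightarrow> bool" where
  "cmap X Y F \<longleftrightarrow>
     (\<forall>n x. x \<in> cells X n \<longrightarrow> F n x \<in> cells Y n) \<and>
     (\<forall>m n f x. box_hom m n f \<and> x \<in> cells X n \<longrightarrow> F m (act X m n f x) = act Y m n f (F n x))"

definition bot_v :: "nat \<Rightarrow> bool list" where "bot_v n = replicate n False"
definition top_v :: "nat \<Rightarrow> bool list" where "top_v n = replicate n True"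

definition constv :: "nat \<Rightarrow> bool list \<Rightarrow> bhom" where
  "constv m v = hext m (\<lambda>_. v)"

type_synonym ncell = "(nat \<times> bhom) set"

text \<open>Pointwise pushout: the m-cubes of the i-th bead are the box maps [1]^m -> [1]^(ds!i);
  the degenerate cube at omega of bead i is identified with the one at alpha of bead i+1.\<close>

definition bead_cells :: "nat list \<Rightarrow> nat \<Rightarrow> (nat \<times> bhom) set" where
  "bead_cells ds m = {(i, f). i < length ds \<and> box_hom m (ds ! i) f}"

definition glue :: "nat list \<Rightarrow> nat \<Rightarrow> ((nat \<times> bhom) \<times> (nat \<times> bhom)) set" where
  "glue ds m = {((i, constv m (top_v (ds ! i))), (Suc i, constv m (bot_v (ds ! Suc i)))) | i.
                  Suc i < length ds}"

definition wrel :: "nat list \<Rightarrow> nat \<Rightarrow> ((nat \<times> bhom) \<times> (nat \<times> bhom)) set" where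
  "wrel ds m = (glue ds m \<union> (glue ds m)\<inverse>)\<^sup>*"

definition bcell :: "nat list \<Rightarrow> nat \<Rightarrow> nat \<Rightarrow> bhom \<Rightarrow> ncell" where
  "bcell ds m i f = wrel ds m `` {(i, f)}"

definition wedge :: "nat list \<Rightarrow> ncell cset" where
  "wedge ds = \<lparr> cells = (\<lambda>m. (\<lambda>(i, f). bcell ds m i f) ` bead_cells ds m),
                act = (\<lambda>m k g X. the_elem ((\<lambda>(i, f). bcell ds m i (hext m (f \<circ> g))) ` X)) \<rparr>"

definition walpha :: "nat list \<Rightarrow> ncell" where
  "walpha ds = bcell ds 0 0 (constv 0 (bot_v (ds ! 0)))"

definition womega :: "nat list \<Rightarrow> ncell" where
  "womega ds = bcell ds 0 (length ds - 1) (constv 0 (top_v (last ds)))"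

text \<open>Necklace: a wedge of cubes of positive dimension, or the point [1]^0 (empty wedge).\<close>
definition necklace :: "nat list \<Rightarrow> bool" where
  "necklace ds \<longleftrightarrow> ds \<noteq> [] \<and> (ds = [0] \<or> (\<forall>d \<in> set ds. 0 < d))"

text \<open>The map out of a wedge induced (Yoneda + pushout) by a list of cubes xs!i in
  the (ds!i)-cubes of C: this is the map x_1 * ... * x_k.\<close>
definition wmap :: "'c cset \<Rightarrow> nat list \<Rightarrow> 'c list \<Rightarrow> nat \<Rightarrow> ncell \<Rightarrow> 'c" where
  "wmap C ds xs = (\<lambda>m X. the_elem ((\<lambda>(i, f). act C m (ds ! i) f (xs ! i)) ` X))"

definition in_bead :: "nat list \<Rightarrow> nat \<Rightarrow> ncell \<Rightarrow> bool list \<Rightarrow> bool" where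
  "in_bead ns i x v \<longleftrightarrow> i < length ns \<and> length v = ns ! i \<and> x = bcell ns 0 i (constv 0 v)"

definition vle :: "bool list \<Rightarrow> bool list \<Rightarrow> bool" where
  "vle u v \<longleftrightarrow> list_all2 (\<lambda>p q. p \<longrightarrow> q) u v"

definition prec :: "nat list \<Rightarrow> ncell \<Rightarrow> ncell \<Rightarrow> bool" where
  "prec ns x y \<longleftrightarrow>
     (\<exists>i u v. in_bead ns i x u \<and> in_bead ns i y v \<and> vle u v) \<or>
     (\<exists>i j u v. i < j \<and> in_bead ns i x u \<and> in_bead ns j y v)"

definition vdist :: "bool list \<Rightarrow> bool list \<Rightarrow> nat" where
  "vdist u v = card {p. p < length u \<and> v ! p \<and> \<not> u ! p}"

fun fill :: "bool list \<Rightarrow> bool list \<Rightarrow> bool list \<Rightarrow> bool list" where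
  "fill (p # ps) (q # qs) x =
     (if p then True # fill ps qs x
      else if \<not> q then False # fill ps qs x
      else hd x # fill ps qs (tl x))"
| "fill _ _ _ = []"

definition iota :: "bool list \<Rightarrow> bool list \<Rightarrow> bhom" where
  "iota u v = hext (vdist u v) (fill u v)"

text \<open>Beads of T_[a,b] together with the cube of T they are sent to by iota^T_{a,b}.
  In the case of distinct beads, a is taken in the last bead containing it and b in the
  first bead containing it (so that no 0-dimensional beads occur).\<close>
definition sub_data :: "nat list \<Rightarrow> ncell \<Rightarrow> ncell \<Rightarrow> (nat \<times> ncell) list" where
  "sub_data ns a b =
    (if \<exists>i u v. in_bead ns i a u \<and> in_bead ns i b v \<and> vle u v then
       (case (SOME (i, u, v). in_bead ns i a u \<and> in_bead ns i b v \<and> vle u v) of (i, u, v) \<Rightarrow>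
          [(vdist u v, bcell ns (vdist u v) i (iota u v))])
     else
       (let i = (GREATEST i. \<exists>u. in_bead ns i a u);
            u = (THE u. in_bead ns i a u);
            j = (LEAST j. \<exists>v. in_bead ns j b v);
            v = (THE v. in_bead ns j b v)
        in (vdist u (top_v (ns ! i)), bcell ns (vdist u (top_v (ns ! i))) i (iota u (top_v (ns ! i))))
           # map (\<lambda>l. (ns ! l, bcell ns (ns ! l) l (hext (ns ! l) id))) [Suc i..<j]
           @ [(vdist (bot_v (ns ! j)) v, bcell ns (vdist (bot_v (ns ! j)) v) j (iota (bot_v (ns ! j)) v))]))"

definition sub_dims :: "nat list \<Rightarrow> ncell \<Rightarrow> ncell \<Rightarrow> nat list" where
  "sub_dims ns a b = map fst (sub_data ns a b)"

definition sub_iota :: "nat list \<Rightarrow> ncell \<Rightarrow> ncell \<Rightarrow> nat \<Rightarrow> ncell \<Rightarrow> ncell" where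
  "sub_iota ns a b = wmap (wedge ns) (sub_dims ns a b) (map snd (sub_data ns a b))"

definition nec_obj :: "'c cset \<Rightarrow> 'c \<Rightarrow> 'c \<Rightarrow> nat list \<Rightarrow> (nat \<Rightarrow> ncell \<Rightarrow> 'c) \<Rightarrow> bool" where
  "nec_obj S a b ds f \<longleftrightarrow> necklace ds \<and> cmap (wedge ds) S f \<and>
     f 0 (walpha ds) = a \<and> f 0 (womega ds) = b"

definition nec_hom :: "nat list \<Rightarrow> nat list \<Rightarrow> (nat \<Rightarrow> ncell \<Rightarrow> ncell) \<Rightarrow> bool" where
  "nec_hom ds es g \<longleftrightarrow> cmap (wedge ds) (wedge es) g \<and>
     g 0 (walpha ds) = walpha es \<and> g 0 (womega ds) = womega es"

definition over :: "nat list \<Rightarrow> (nat \<Rightarrow> ncell \<Rightarrow> 'c) \<Rightarrow> (nat \<Rightarrow> ncell \<Rightarrow> ncell) \<Rightarrow> (nat \<Rightarrow> ncell \<Rightarrow> 'c) \<Rightarrow> bool" where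
  "over ds t g f \<longleftrightarrow> (\<forall>m x. x \<in> cells (wedge ds) m \<longrightarrow> t m (g m x) = f m x)"

definition nec_terminal :: "'c cset \<Rightarrow> 'c \<Rightarrow> 'c \<Rightarrow> nat list \<Rightarrow> (nat \<Rightarrow> ncell \<Rightarrow> 'c) \<Rightarrow> bool" where
  "nec_terminal S a b es t \<longleftrightarrow> nec_obj S a b es t \<and>
     (\<forall>ds f. nec_obj S a b ds f \<longrightarrow>
        (\<exists>g. nec_hom ds es g \<and> over ds t g f) \<and>
        (\<forall>g g'. nec_hom ds es g \<and> over ds t g f \<and> nec_hom ds es g' \<and> over ds t g' f \<longrightarrow>
           (\<forall>m x. x \<in> cells (wedge ds) m \<longrightarrow> g m x = g' m x)))"

end

theory Submission
  imports Defs
begin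

lemma box_hom_len: "box_hom m n f \<Longrightarrow> length x = m \<Longrightarrow> length (f x) = n"
  by (induction arbitrary: x rule: box_hom.induct) (auto simp: hext_def min_def)

lemma box_hom_undef: "box_hom m n f \<Longrightarrow> length x \<noteq> m \<Longrightarrow> f x = undefined"
  by (induction arbitrary: x rule: box_hom.induct) (auto simp: hext_def)

lemma hext_cong: "(\<And>x. length x = m \<Longrightarrow> f x = g x) \<Longrightarrow> hext m f = hext m g"
  by (auto simp: hext_def)

lemma box_hom_hext: "box_hom m n f \<Longrightarrow> hext m f = f"
  by (auto simp: hext_def box_hom_undef)

lemma box_hom_eqI: "box_hom m n f \<Longrightarrow> box_hom m n g \<Longrightarrow> (\<And>x. length x = m \<Longrightarrow> f x = g x) \<Longrightarrow> f = g"
  by (metis box_hom_hext hext_cong)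

lemma hext_apply: "length x = m \<Longrightarrow> hext m f x = f x"
  by (simp add: hext_def)

lemma vle_conv: "vle u v \<longleftrightarrow> length u = length v \<and> (\<forall>p<length u. u ! p \<longrightarrow> v ! p)"
  by (simp add: vle_def list_all2_conv_all_nth)

lemma vle_refl[simp]: "vle u u"
  by (simp add: vle_conv)

lemma vle_trans: "vle u v \<Longrightarrow> vle v w \<Longrightarrow> vle u w"
  by (simp add: vle_conv)

lemma vle_antisym: "vle u v \<Longrightarrow> vle v u \<Longrightarrow> u = v"
  by (auto simp: vle_conv intro: nth_equalityI)

lemma vle_top: "vle u (top_v n) \<longleftrightarrow> length u = n"
  by (auto simp: vle_conv top_v_def)

lemma vle_bot: "vle (bot_v n) u \<longleftrightarrow> length u = n"
  by (auto simp: vle_conv bot_v_def)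

lemma vle_from_top: "vle (top_v n) u \<longleftrightarrow> u = top_v n"
  by (auto simp: vle_conv top_v_def intro: nth_equalityI)

lemma vle_to_bot: "vle u (bot_v n) \<longleftrightarrow> u = bot_v n"
  by (auto simp: vle_conv bot_v_def intro: nth_equalityI)

lemma top_ne_bot: "0 < n \<Longrightarrow> top_v n \<noteq> bot_v n"
  by (cases n) (auto simp: top_v_def bot_v_def)

lemma len_top[simp]: "length (top_v n) = n" and len_bot[simp]: "length (bot_v n) = n"
  by (auto simp: top_v_def bot_v_def)

lemma vle_len: "vle u v \<Longrightarrow> length u = length v"
  by (simp add: vle_conv)

lemma box_hom_mono:
  "box_hom m n f \<Longrightarrow> vle x y \<Longrightarrow> length x = m \<Longrightarrow> vle (f x) (f y)"
proof (induction arbitrary: x y rule: box_hom.induct)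
  case (bh_id n)
  then show ?case by (simp add: hext_def vle_len)
next
  case (bh_face i n e)
  then show ?case
    by (auto simp: hext_def vle_len vle_def intro!: list_all2_appendI list_all2_takeI list_all2_dropI)
next
  case (bh_degen i n)
  then show ?case
    by (auto simp: hext_def vle_len vle_def intro!: list_all2_appendI list_all2_takeI list_all2_dropI)
next
  case (bh_conn i n)
  then have "length y = Suc n" by (simp add: vle_len)
  with bh_conn show ?case
    apply (simp add: hext_def vle_def)
    apply (intro list_all2_appendI list_all2_takeI list_all2_Cons[THEN iffD2] conjI list_all2_dropI)
    apply (auto simp: list_all2_conv_all_nth)
    done
next
  case (bh_comp m n f k g)
  then show ?case
    by (simp add: hext_def vle_len box_hom_len)
qed


lemma vdist_Nil[simp]: "vdist [] v = 0"
  by (simp add: vdist_def)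

lemma card_less_Suc_split:
  "card {p. p < Suc n \<and> P p} = (if P 0 then 1 else 0) + card {p. p < n \<and> P (Suc p)}"
proof -
  have e: "{p. p < Suc n \<and> P p} = {p. p = 0 \<and> P 0} \<union> Suc ` {p. p < n \<and> P (Suc p)}"
  proof (rule set_eqI, rule iffI)
    fix x assume "x \<in> {p. p < Suc n \<and> P p}"
    then show "x \<in> {p. p = 0 \<and> P 0} \<union> Suc ` {p. p < n \<and> P (Suc p)}"
      by (cases x) auto
  qed auto
  have d: "{p. p = 0 \<and> P 0} \<inter> Suc ` {p. p < n \<and> P (Suc p)} = {}" by auto
  have "card {p. p = 0 \<and> P 0} = (if P 0 then 1 else 0)" by auto
  then show ?thesis unfolding e
    by (subst card_Un_disjoint) (auto simp: card_image)
qed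

lemma vdist_Cons[simp]: "vdist (x # u) (y # v) = (if y \<and> \<not> x then Suc (vdist u v) else vdist u v)"
  unfolding vdist_def by (simp add: card_less_Suc_split)

lemma vdist_len: "length u = length v \<Longrightarrow> vdist u v \<le> length u"
proof -
  assume "length u = length v"
  have "{p. p < length u \<and> v ! p \<and> \<not> u ! p} \<subseteq> {..<length u}" by auto
  then show ?thesis unfolding vdist_def by (metis card_lessThan card_mono finite_lessThan)
qed

fun proj :: "bool list \<Rightarrow> bool list \<Rightarrow> bool list \<Rightarrow> bool list" where
  "proj (p # ps) (q # qs) (y # ys) = (if \<not> p \<and> q then y # proj ps qs ys else proj ps qs ys)"
| "proj _ _ _ = []"

lemma len_fill: "length (fill u v x) = min (length u) (length v)"
  by (induction u v x rule: fill.induct) auto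

lemma len_proj: "length u = length v \<Longrightarrow> length y = length u \<Longrightarrow> length (proj u v y) = vdist u v"
  by (induction u v y rule: proj.induct) auto

lemma fill_proj: "vle u y \<Longrightarrow> vle y v \<Longrightarrow> fill u v (proj u v y) = y"
proof (induction u v y rule: proj.induct)
  case (1 p ps q qs y ys)
  then show ?case by (auto simp: vle_def)
qed (auto simp: vle_def)

lemma proj_fill: "vle u v \<Longrightarrow> length x = vdist u v \<Longrightarrow> proj u v (fill u v x) = x"
proof (induction u arbitrary: v x)
  case Nil
  then show ?case by (cases v) (auto simp: vle_def)
next
  case (Cons p ps)
  then obtain q qs where v: "v = q # qs" by (cases v) (auto simp: vle_def)
  with Cons.prems Cons.IH[of qs x] Cons.IH[of qs "tl x"] show ?case by (cases x) (auto simp: vle_def split: if_splits)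
qed

lemma fill_ge: "vle u v \<Longrightarrow> length x = vdist u v \<Longrightarrow> vle u (fill u v x)"
proof (induction u arbitrary: v x)
  case Nil
  then show ?case by (cases v) (auto simp: vle_def)
next
  case (Cons p ps)
  then obtain q qs where v: "v = q # qs" by (cases v) (auto simp: vle_def)
  with Cons.prems Cons.IH[of qs x] Cons.IH[of qs "tl x"] show ?case by (cases x) (auto simp: vle_def split: if_splits)
qed

lemma fill_le: "vle u v \<Longrightarrow> length x = vdist u v \<Longrightarrow> vle (fill u v x) v"
proof (induction u arbitrary: v x)
  case Nil
  then show ?case by (cases v) (auto simp: vle_def)
next
  case (Cons p ps)
  then obtain q qs where v: "v = q # qs" by (cases v) (auto simp: vle_def)
  with Cons.prems Cons.IH[of qs x] Cons.IH[of qs "tl x"] show ?case by (cases x) (auto simp: vle_def split: if_splits)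
qed

lemma fill_bot: "vle u v \<Longrightarrow> fill u v (bot_v (vdist u v)) = u"
proof (induction u arbitrary: v)
  case Nil
  then show ?case by (cases v) (auto simp: vle_def)
next
  case (Cons p ps)
  then obtain q qs where v: "v = q # qs" by (cases v) (auto simp: vle_def)
  with Cons show ?case by (auto simp: vle_def bot_v_def)
qed

lemma fill_top: "vle u v \<Longrightarrow> fill u v (top_v (vdist u v)) = v"
proof (induction u arbitrary: v)
  case Nil
  then show ?case by (cases v) (auto simp: vle_def)
next
  case (Cons p ps)
  then obtain q qs where v: "v = q # qs" by (cases v) (auto simp: vle_def)
  with Cons show ?case by (auto simp: vle_def top_v_def)
qed

lemma proj_top: "length u = length v \<Longrightarrow> proj u v (top_v (length u)) = top_v (vdist u v)"
  by (induction u v "top_v (length u)" arbitrary: rule: proj.induct)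
     (auto simp: top_v_def)

lemma proj_bot: "length u = length v \<Longrightarrow> proj u v (bot_v (length u)) = bot_v (vdist u v)"
  by (induction u v "bot_v (length u)" arbitrary: rule: proj.induct)
     (auto simp: bot_v_def)

lemma bh_prepend: "box_hom m n f \<Longrightarrow> box_hom m (Suc n) (hext m (\<lambda>x. e # f x))"
proof -
  assume f: "box_hom m n f"
  have "box_hom n (Suc n) (hext n (\<lambda>x. take 0 x @ e # drop 0 x))" by (rule bh_face) simp
  from bh_comp[OF this f] have "box_hom m (Suc n) (hext m (hext n (\<lambda>x. take 0 x @ e # drop 0 x) \<circ> f))" .
  moreover have "hext m (hext n (\<lambda>x. take 0 x @ e # drop 0 x) \<circ> f) = hext m (\<lambda>x. e # f x)"
    by (rule hext_cong) (simp add: hext_def box_hom_len[OF f])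
  ultimately show ?thesis by simp
qed

lemma bh_drophead: "box_hom m n f \<Longrightarrow> box_hom (Suc m) n (hext (Suc m) (\<lambda>x. f (tl x)))"
proof -
  assume f: "box_hom m n f"
  have "box_hom (Suc m) m (hext (Suc m) (\<lambda>x. take 0 x @ drop (Suc 0) x))" by (rule bh_degen) simp
  from bh_comp[OF f this] have "box_hom (Suc m) n (hext (Suc m) (f \<circ> hext (Suc m) (\<lambda>x. take 0 x @ drop (Suc 0) x)))" .
  moreover have "hext (Suc m) (f \<circ> hext (Suc m) (\<lambda>x. take 0 x @ drop (Suc 0) x)) = hext (Suc m) (\<lambda>x. f (tl x))"
    by (rule hext_cong) (simp add: hext_def drop_Suc)
  ultimately show ?thesis by simp
qed

lemma bh_shift: "box_hom m n f \<Longrightarrow> box_hom (Suc m) (Suc n) (hext (Suc m) (\<lambda>x. hd x # f (tl x)))"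
proof (induction rule: box_hom.induct)
  case (bh_id n)
  have "hext (Suc n) (\<lambda>x. hd x # hext n id (tl x)) = hext (Suc n) id"
    by (rule hext_cong) (case_tac x; simp add: hext_def)
  then show ?case using box_hom.bh_id by simp
next
  case (bh_face i n e)
  have "hext (Suc n) (\<lambda>x. hd x # hext n (\<lambda>x. take i x @ e # drop i x) (tl x)) =
        hext (Suc n) (\<lambda>x. take (Suc i) x @ e # drop (Suc i) x)"
    by (rule hext_cong) (case_tac x; simp add: hext_def)
  then show ?case using box_hom.bh_face[of "Suc i" "Suc n" e] bh_face by simp
next
  case (bh_degen i n)
  have "hext (Suc (Suc n)) (\<lambda>x. hd x # hext (Suc n) (\<lambda>x. take i x @ drop (Suc i) x) (tl x)) =
        hext (Suc (Suc n)) (\<lambda>x. take (Suc i) x @ drop (Suc (Suc i)) x)"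
    by (rule hext_cong) (case_tac x; simp add: hext_def)
  then show ?case using box_hom.bh_degen[of "Suc i" "Suc n"] bh_degen by simp
next
  case (bh_conn i n)
  have "hext (Suc (Suc n)) (\<lambda>x. hd x # hext (Suc n) (\<lambda>x. take i x @ (x ! i \<or> x ! Suc i) # drop (Suc (Suc i)) x) (tl x)) =
        hext (Suc (Suc n)) (\<lambda>x. take (Suc i) x @ (x ! Suc i \<or> x ! Suc (Suc i)) # drop (Suc (Suc (Suc i))) x)"
    by (rule hext_cong) (case_tac x; simp add: hext_def)
  then show ?case using box_hom.bh_conn[of "Suc i" "Suc n"] bh_conn by simp
next
  case (bh_comp m n f k g)
  from box_hom.bh_comp[OF bh_comp.IH]
  have "box_hom (Suc k) (Suc n) (hext (Suc k) (hext (Suc m) (\<lambda>x. hd x # f (tl x)) \<circ> hext (Suc k) (\<lambda>x. hd x # g (tl x))))" .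
  moreover have "hext (Suc k) (hext (Suc m) (\<lambda>x. hd x # f (tl x)) \<circ> hext (Suc k) (\<lambda>x. hd x # g (tl x)))
     = hext (Suc k) (\<lambda>x. hd x # hext k (f \<circ> g) (tl x))"
    by (rule hext_cong) (auto simp: hext_def neq_Nil_conv box_hom_len[OF bh_comp.hyps(2)])
  ultimately show ?case by simp
qed

lemma bh_const0: "box_hom m 0 (hext m (\<lambda>_. []))"
proof (induction m)
  case 0
  have "hext 0 (\<lambda>_. []) = hext 0 id" by (rule hext_cong) simp
  then show ?case using bh_id[of 0] by simp
next
  case (Suc m)
  have "hext (Suc m) (\<lambda>x. hext m (\<lambda>_. []) (tl x)) = hext (Suc m) (\<lambda>_. [])"
    by (rule hext_cong) (simp add: hext_apply)
  with bh_drophead[OF Suc] show ?case by simp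
qed

lemma bh_const_pt: "box_hom 0 (length v) (hext 0 (\<lambda>_. v))"
proof (induction v)
  case Nil
  then show ?case using bh_const0[of 0] by simp
next
  case (Cons e v)
  have "hext 0 (\<lambda>x. e # hext 0 (\<lambda>_. v) x) = hext 0 (\<lambda>_. e # v)"
    by (rule hext_cong) (simp add: hext_apply)
  with bh_prepend[OF Cons, of e] show ?case by simp
qed

lemma bh_constv: "box_hom m (length v) (constv m v)"
proof -
  from bh_comp[OF bh_const_pt[of v] bh_const0[of m]]
  have "box_hom m (length v) (hext m (hext 0 (\<lambda>_. v) \<circ> hext m (\<lambda>_. [])))" .
  moreover have "hext m (hext 0 (\<lambda>_. v) \<circ> hext m (\<lambda>_. [])) = constv m v"
    unfolding constv_def by (rule hext_cong) (simp add: hext_def)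
  ultimately show ?thesis by simp
qed

lemma bh_constv': "length v = n \<Longrightarrow> box_hom m n (constv m v)"
  using bh_constv by blast

lemma bh_iota: "vle u v \<Longrightarrow> box_hom (vdist u v) (length u) (iota u v)"
proof (induction u arbitrary: v)
  case Nil
  then have "v = []" by (simp add: vle_def)
  have "iota [] [] = hext 0 id" unfolding iota_def by (simp; rule hext_cong; simp)
  then show ?case using bh_id[of 0] \<open>v = []\<close> by simp
next
  case (Cons p ps)
  then obtain q qs where v: "v = q # qs" and pq: "p \<longrightarrow> q" and l: "vle ps qs"
    by (cases v) (auto simp: vle_def)
  note IH = Cons.IH[OF l]
  show ?case
  proof (cases "\<not> p \<and> q")
    case True
    from bh_shift[OF IH] have "box_hom (Suc (vdist ps qs)) (Suc (length ps))
        (hext (Suc (vdist ps qs)) (\<lambda>x. hd x # iota ps qs (tl x)))" .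
    moreover have "hext (Suc (vdist ps qs)) (\<lambda>x. hd x # iota ps qs (tl x)) =
       hext (Suc (vdist ps qs)) (fill (p # ps) (q # qs))"
    proof (rule hext_cong)
      fix x :: "bool list" assume "length x = Suc (vdist ps qs)"
      then show "hd x # iota ps qs (tl x) = fill (p # ps) (q # qs) x"
        using True by (simp add: iota_def hext_apply)
    qed
    moreover have "vdist (p # ps) (q # qs) = Suc (vdist ps qs)" using True by auto
    ultimately show ?thesis using v unfolding iota_def by simp
  next
    case False
    from bh_prepend[OF IH, of p] have "box_hom (vdist ps qs) (Suc (length ps))
        (hext (vdist ps qs) (\<lambda>x. p # iota ps qs x))" .
    moreover have "hext (vdist ps qs) (\<lambda>x. p # iota ps qs x) = hext (vdist ps qs) (fill (p # ps) (q # qs))"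
    proof (rule hext_cong)
      fix x :: "bool list" assume "length x = vdist ps qs"
      then show "p # iota ps qs x = fill (p # ps) (q # qs) x"
        using False pq by (cases p; cases q) (simp_all add: iota_def hext_apply)
    qed
    moreover have "vdist (p # ps) (q # qs) = vdist ps qs" using False by auto
    ultimately show ?thesis using v unfolding iota_def by simp
  qed
qed

lemma bh_proj: "length u = length v \<Longrightarrow> box_hom (length u) (vdist u v) (hext (length u) (proj u v))"
proof (induction u arbitrary: v)
  case Nil
  then have "v = []" by simp
  have "hext 0 (\<lambda>_. []) = hext 0 id" by (rule hext_cong) simp
  then show ?case using bh_id[of 0] \<open>v = []\<close> by simp
next
  case (Cons p ps)
  then obtain q qs where v: "v = q # qs" and l: "length ps = length qs"
    by (cases v) auto
  note IH = Cons.IH[OF l]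
  show ?case
  proof (cases "\<not> p \<and> q")
    case True
    from bh_shift[OF IH] have "box_hom (Suc (length ps)) (Suc (vdist ps qs))
        (hext (Suc (length ps)) (\<lambda>x. hd x # hext (length ps) (proj ps qs) (tl x)))" .
    moreover have "hext (Suc (length ps)) (\<lambda>x. hd x # hext (length ps) (proj ps qs) (tl x)) = hext (Suc (length ps)) (proj (p # ps) (q # qs))"
    proof (rule hext_cong)
      fix x :: "bool list" assume "length x = Suc (length ps)"
      then show "hd x # hext (length ps) (proj ps qs) (tl x) = proj (p # ps) (q # qs) x"
        using True by (cases x) (simp_all add: hext_apply)
    qed
    moreover have "vdist (p # ps) (q # qs) = Suc (vdist ps qs)" using True by auto
    ultimately show ?thesis using v by simp
  next
    case False
    from bh_drophead[OF IH] have "box_hom (Suc (length ps)) (vdist ps qs)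
        (hext (Suc (length ps)) (\<lambda>x. hext (length ps) (proj ps qs) (tl x)))" .
    moreover have "hext (Suc (length ps)) (\<lambda>x. hext (length ps) (proj ps qs) (tl x)) = hext (Suc (length ps)) (proj (p # ps) (q # qs))"
    proof (rule hext_cong)
      fix x :: "bool list" assume "length x = Suc (length ps)"
      then show "hext (length ps) (proj ps qs) (tl x) = proj (p # ps) (q # qs) x"
        using False by (cases x) (simp_all add: hext_apply)
    qed
    moreover have "vdist (p # ps) (q # qs) = vdist ps qs" using False by auto
    ultimately show ?thesis using v by simp
  qed
qed

lemma bh_factor:
  assumes s: "box_hom m n \<sigma>" and uv: "length u = n" "length v = n"
    and r: "\<And>x. length x = m \<Longrightarrow> vle u (\<sigma> x) \<and> vle (\<sigma> x) v"
  shows "\<exists>\<tau>. box_hom m (vdist u v) \<tau> \<and> \<sigma> = hext m (iota u v \<circ> \<tau>)"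
proof -
  define \<tau> where "\<tau> = hext m (hext n (proj u v) \<circ> \<sigma>)"
  have p: "box_hom n (vdist u v) (hext n (proj u v))"
    using bh_proj[of u v] uv by simp
  have "box_hom m (vdist u v) \<tau>" unfolding \<tau>_def
    by (rule bh_comp[OF p s])
  moreover have "\<sigma> = hext m (iota u v \<circ> \<tau>)"
  proof -
    have "hext m \<sigma> = hext m (iota u v \<circ> \<tau>)"
    proof (rule hext_cong)
      fix x :: "bool list" assume x: "length x = m"
      have l: "length (\<sigma> x) = n" using box_hom_len[OF s x] .
      have l2: "length (proj u v (\<sigma> x)) = vdist u v"
        using len_proj[of u v "\<sigma> x"] l uv by simp
      have "\<tau> x = proj u v (\<sigma> x)" unfolding \<tau>_def using x l by (simp add: hext_apply)
      then have "(iota u v \<circ> \<tau>) x = fill u v (proj u v (\<sigma> x))"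
        using l2 by (simp add: iota_def hext_apply)
      also have "\<dots> = \<sigma> x" using fill_proj r[OF x] by blast
      finally show "\<sigma> x = (iota u v \<circ> \<tau>) x" by simp
    qed
    then show ?thesis using box_hom_hext[OF s] by simp
  qed
  ultimately show ?thesis by blast
qed

lemma iota_inj:
  assumes "vle u v" "length x = vdist u v" "length y = vdist u v" "iota u v x = iota u v y"
  shows "x = y"
proof -
  have "fill u v x = fill u v y" using assms(2-4) by (simp add: iota_def hext_apply)
  then show ?thesis using proj_fill[OF assms(1,2)] proj_fill[OF assms(1,3)] by metis
qed


definition gl :: "nat list \<Rightarrow> bool" where
  "gl ds \<longleftrightarrow> (\<forall>i. Suc i < length ds \<longrightarrow> 0 < ds ! i \<and> 0 < ds ! Suc i)"

lemma necklace_gl: "necklace ds \<Longrightarrow> gl ds"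
  unfolding necklace_def gl_def by (auto simp: nth_mem)

definition gp :: "nat list \<Rightarrow> nat \<Rightarrow> nat \<times> bhom \<Rightarrow> nat \<times> bhom \<Rightarrow> bool" where
  "gp ds m x y \<longleftrightarrow> (\<exists>i. Suc i < length ds \<and> x = (i, constv m (top_v (ds ! i))) \<and>
       y = (Suc i, constv m (bot_v (ds ! Suc i))))"

lemma constv_inj: "constv m v = constv m w \<Longrightarrow> v = w"
  unfolding constv_def hext_def by (drule fun_cong[of _ _ "replicate m False"]) simp

lemma constv_eq_iff: "constv m v = constv m w \<longleftrightarrow> v = w"
  using constv_inj by blast

lemma glue_iff: "(x, y) \<in> glue ds m \<longleftrightarrow> gp ds m x y"
  unfolding glue_def gp_def by auto

lemma bot_ne_top: "0 < n \<Longrightarrow> bot_v n \<noteq> top_v n"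
  using top_ne_bot by metis

lemma wrel_iff:
  assumes "gl ds"
  shows "(x, y) \<in> wrel ds m \<longleftrightarrow> x = y \<or> gp ds m x y \<or> gp ds m y x"
proof
  assume "(x, y) \<in> wrel ds m"
  then have "(x, y) \<in> (glue ds m \<union> (glue ds m)\<inverse>)\<^sup>*" by (simp add: wrel_def)
  then show "x = y \<or> gp ds m x y \<or> gp ds m y x"
  proof (induction rule: rtrancl_induct)
    case base
    then show ?case by simp
  next
    case (step y z)
    from step.hyps(2) have yz: "gp ds m y z \<or> gp ds m z y" by (auto simp: glue_iff)
    have tb: "\<And>i. i < length ds \<Longrightarrow> 0 < ds ! i \<Longrightarrow> top_v (ds ! i) \<noteq> bot_v (ds ! i)"
      by (simp add: top_ne_bot)
    from step.IH yz show ?case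
      using assms unfolding gp_def gl_def
      by (auto simp: constv_eq_iff top_ne_bot bot_ne_top)
  qed
next
  assume "x = y \<or> gp ds m x y \<or> gp ds m y x"
  then show "(x, y) \<in> wrel ds m"
    unfolding wrel_def by (auto simp: glue_iff)
qed

lemma wrel_equiv: "equiv UNIV (wrel ds m)"
proof (rule equivI)
  show "refl_on UNIV (wrel ds m)" unfolding wrel_def by (simp add: refl_on_def)
  show "sym (wrel ds m)" unfolding wrel_def by (intro sym_rtrancl sym_Un_converse)
  show "trans (wrel ds m)" unfolding wrel_def by (rule trans_rtrancl)
qed simp

lemma bcell_eq_iff:
  assumes "gl ds"
  shows "bcell ds m i f = bcell ds m i' f' \<longleftrightarrow>
     (i, f) = (i', f') \<or> gp ds m (i, f) (i', f') \<or> gp ds m (i', f') (i, f)"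
  unfolding bcell_def
  using eq_equiv_class_iff[OF wrel_equiv, of "(i, f)" "(i', f')"] wrel_iff[OF assms] by simp

lemma mem_bcell: "(j, h) \<in> bcell ds m i f \<longleftrightarrow> ((i, f), (j, h)) \<in> wrel ds m"
  unfolding bcell_def by simp

lemma hext_constv_comp: "box_hom m k g \<Longrightarrow> hext m (constv k v \<circ> g) = constv m v"
  unfolding constv_def by (rule hext_cong) (simp add: hext_apply box_hom_len)

lemma act_wedge:
  assumes "gl ds" "box_hom m k g"
  shows "act (wedge ds) m k g (bcell ds k i f) = bcell ds m i (hext m (f \<circ> g))"
proof -
  have "(\<lambda>(i, f). bcell ds m i (hext m (f \<circ> g))) ` bcell ds k i f = {bcell ds m i (hext m (f \<circ> g))}"
  proof (rule set_eqI, rule iffI)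
    fix X assume "X \<in> (\<lambda>(i, f). bcell ds m i (hext m (f \<circ> g))) ` bcell ds k i f"
    then obtain j h where jh: "(j, h) \<in> bcell ds k i f" and X: "X = bcell ds m j (hext m (h \<circ> g))"
      by auto
    from jh have "(i, f) = (j, h) \<or> gp ds k (i, f) (j, h) \<or> gp ds k (j, h) (i, f)"
      by (simp add: mem_bcell wrel_iff[OF assms(1)])
    then have "bcell ds m j (hext m (h \<circ> g)) = bcell ds m i (hext m (f \<circ> g))"
    proof (elim disjE)
      assume "gp ds k (i, f) (j, h)"
      then show ?thesis unfolding gp_def
        by (auto simp: hext_constv_comp[OF assms(2)] bcell_eq_iff[OF assms(1)] gp_def)
    next
      assume "gp ds k (j, h) (i, f)"
      then show ?thesis unfolding gp_def
        by (auto simp: hext_constv_comp[OF assms(2)] bcell_eq_iff[OF assms(1)] gp_def)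
    qed simp
    with X show "X \<in> {bcell ds m i (hext m (f \<circ> g))}" by simp
  next
    fix X assume "X \<in> {bcell ds m i (hext m (f \<circ> g))}"
    moreover have "(i, f) \<in> bcell ds k i f" by (simp add: mem_bcell wrel_iff[OF assms(1)])
    ultimately show "X \<in> (\<lambda>(i, f). bcell ds m i (hext m (f \<circ> g))) ` bcell ds k i f"
      by force
  qed
  then show ?thesis by (simp add: wedge_def)
qed

lemma cells_wedge: "X \<in> cells (wedge ds) m \<longleftrightarrow> (\<exists>i f. i < length ds \<and> box_hom m (ds ! i) f \<and> X = bcell ds m i f)"
  by (auto simp: wedge_def bead_cells_def)

lemma bcell_in_cells: "i < length ds \<Longrightarrow> box_hom m (ds ! i) f \<Longrightarrow> bcell ds m i f \<in> cells (wedge ds) m"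
  by (auto simp: cells_wedge)

lemma hext_comp_id: "box_hom m n f \<Longrightarrow> hext m (hext n id \<circ> f) = f"
proof -
  assume f: "box_hom m n f"
  have "hext m (hext n id \<circ> f) = hext m f" by (rule hext_cong) (simp add: hext_apply box_hom_len[OF f])
  then show ?thesis using box_hom_hext[OF f] by simp
qed

lemma hext_id_comp: "box_hom m n f \<Longrightarrow> hext m (f \<circ> hext m id) = f"
proof -
  assume f: "box_hom m n f"
  have "hext m (f \<circ> hext m id) = hext m f" by (rule hext_cong) (simp add: hext_apply)
  then show ?thesis using box_hom_hext[OF f] by simp
qed

lemma wedge_cubical: assumes "gl ds" shows "cubical_set (wedge ds)"
  unfolding cubical_set_def
proof (intro conjI allI impI)
  fix m n f x assume a: "box_hom m n f \<and> x \<in> cells (wedge ds) n"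
  then obtain i h where i: "i < length ds" "box_hom n (ds ! i) h" "x = bcell ds n i h"
    by (auto simp: cells_wedge)
  then have "act (wedge ds) m n f x = bcell ds m i (hext m (h \<circ> f))"
    using a act_wedge[OF assms, of m n f i h] by simp
  then show "act (wedge ds) m n f x \<in> cells (wedge ds) m"
    using a i by (simp add: bcell_in_cells bh_comp)
next
  fix n x assume "x \<in> cells (wedge ds) n"
  then obtain i h where "i < length ds" "box_hom n (ds ! i) h" "x = bcell ds n i h"
    by (auto simp: cells_wedge)
  then show "act (wedge ds) n n (hext n id) x = x"
    using act_wedge[OF assms bh_id, of n i h] hext_id_comp by simp
next
  fix k m n f g x assume a: "box_hom m n f \<and> box_hom k m g \<and> x \<in> cells (wedge ds) n"
  then obtain i h where i: "i < length ds" "box_hom n (ds ! i) h" "x = bcell ds n i h"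
    by (auto simp: cells_wedge)
  have "hext k (h \<circ> hext k (f \<circ> g)) = hext k (hext m (h \<circ> f) \<circ> g)"
  proof (rule hext_cong)
    fix y :: "bool list" assume y: "length y = k"
    then have "length (g y) = m" using a box_hom_len by blast
    with y show "(h \<circ> hext k (f \<circ> g)) y = (hext m (h \<circ> f) \<circ> g) y" by (simp add: hext_apply)
  qed
  moreover have "act (wedge ds) k n (hext k (f \<circ> g)) x = bcell ds k i (hext k (h \<circ> hext k (f \<circ> g)))"
    using a i act_wedge[OF assms bh_comp[of m n f k g]] by simp
  moreover have "act (wedge ds) k m g (act (wedge ds) m n f x) = bcell ds k i (hext k (hext m (h \<circ> f) \<circ> g))"
    using a i act_wedge[OF assms] by simp
  ultimately show "act (wedge ds) k n (hext k (f \<circ> g)) x = act (wedge ds) k m g (act (wedge ds) m n f x)"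
    by simp
qed


lemma bh_constv0: "box_hom m 0 (constv m [])"
  unfolding constv_def by (rule bh_const0)

lemma constv_split: "constv m v = hext m (constv 0 v \<circ> constv m [])"
  unfolding constv_def by (rule hext_cong) (simp add: hext_apply)

lemma cub_act: "cubical_set C \<Longrightarrow> box_hom m n f \<Longrightarrow> x \<in> cells C n \<Longrightarrow> act C m n f x \<in> cells C m"
  unfolding cubical_set_def by blast

lemma cub_comp: "cubical_set C \<Longrightarrow> box_hom m n f \<Longrightarrow> box_hom k m g \<Longrightarrow> x \<in> cells C n \<Longrightarrow>
   act C k n (hext k (f \<circ> g)) x = act C k m g (act C m n f x)"
  unfolding cubical_set_def by blast

lemma cub_id: "cubical_set C \<Longrightarrow> x \<in> cells C n \<Longrightarrow> act C n n (hext n id) x = x"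
  unfolding cubical_set_def by blast

lemma act_constv:
  assumes "cubical_set C" "x \<in> cells C k" "length v = k"
  shows "act C m k (constv m v) x = act C m 0 (constv m []) (act C 0 k (constv 0 v) x)"
  using cub_comp[OF assms(1) bh_constv'[OF assms(3)] bh_constv0 assms(2)] constv_split[of m v] by simp

lemma cmap_act: "cmap X Y F \<Longrightarrow> box_hom m n h \<Longrightarrow> x \<in> cells X n \<Longrightarrow> F m (act X m n h x) = act Y m n h (F n x)"
  unfolding cmap_def by blast

lemma cmap_cells: "cmap X Y F \<Longrightarrow> x \<in> cells X n \<Longrightarrow> F n x \<in> cells Y n"
  unfolding cmap_def by blast

definition wdata :: "'c cset \<Rightarrow> nat list \<Rightarrow> 'c list \<Rightarrow> bool" where
  "wdata C ds xs \<longleftrightarrow> (\<forall>i<length ds. xs ! i \<in> cells C (ds ! i)) \<and>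
     (\<forall>i. Suc i < length ds \<longrightarrow> act C 0 (ds ! i) (constv 0 (top_v (ds ! i))) (xs ! i) =
            act C 0 (ds ! Suc i) (constv 0 (bot_v (ds ! Suc i))) (xs ! Suc i))"

lemma wmap_bcell:
  assumes g: "gl ds" and C: "cubical_set C" and w: "wdata C ds xs"
    and i: "i < length ds" and f: "box_hom m (ds ! i) f"
  shows "wmap C ds xs m (bcell ds m i f) = act C m (ds ! i) f (xs ! i)"
proof -
  have "(\<lambda>(i, f). act C m (ds ! i) f (xs ! i)) ` bcell ds m i f = {act C m (ds ! i) f (xs ! i)}"
  proof (rule set_eqI, rule iffI)
    fix X assume "X \<in> (\<lambda>(i, f). act C m (ds ! i) f (xs ! i)) ` bcell ds m i f"
    then obtain y where y: "y \<in> bcell ds m i f" "X = (\<lambda>(i, f). act C m (ds ! i) f (xs ! i)) y"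
      by (rule imageE)
    obtain j h where yy: "y = (j, h)" by (cases y)
    have jh: "(j, h) \<in> bcell ds m i f" using y yy by simp
    have X: "X = act C m (ds ! j) h (xs ! j)" using y yy by simp
    from jh have "(i, f) = (j, h) \<or> gp ds m (i, f) (j, h) \<or> gp ds m (j, h) (i, f)"
      by (simp add: mem_bcell wrel_iff[OF g])
    then have "act C m (ds ! j) h (xs ! j) = act C m (ds ! i) f (xs ! i)"
    proof (elim disjE)
      assume "(i, f) = (j, h)"
      then have "i = j" "f = h" by (simp_all only: prod.inject)
      then show ?thesis by (simp only:)
    next
      assume "gp ds m (i, f) (j, h)"
      then have e: "j = Suc i" "Suc i < length ds" "f = constv m (top_v (ds ! i))" "h = constv m (bot_v (ds ! j))"
        unfolding gp_def by auto
      have c1: "xs ! i \<in> cells C (ds ! i)" "xs ! j \<in> cells C (ds ! j)" using w e unfolding wdata_def by auto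
      have gl1: "act C 0 (ds ! i) (constv 0 (top_v (ds ! i))) (xs ! i) = act C 0 (ds ! j) (constv 0 (bot_v (ds ! j))) (xs ! j)"
        using w e unfolding wdata_def by auto
      show ?thesis unfolding e(3,4) act_constv[OF C c1(1) len_top, of m] act_constv[OF C c1(2) len_bot, of m] gl1 ..
    next
      assume "gp ds m (j, h) (i, f)"
      then have e: "i = Suc j" "Suc j < length ds" "h = constv m (top_v (ds ! j))" "f = constv m (bot_v (ds ! i))"
        unfolding gp_def by auto
      have c1: "xs ! i \<in> cells C (ds ! i)" "xs ! j \<in> cells C (ds ! j)" using w e i unfolding wdata_def by auto
      have gl1: "act C 0 (ds ! j) (constv 0 (top_v (ds ! j))) (xs ! j) = act C 0 (ds ! i) (constv 0 (bot_v (ds ! i))) (xs ! i)"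
        using w e unfolding wdata_def by auto
      show ?thesis unfolding e(3,4) act_constv[OF C c1(1) len_bot, of m] act_constv[OF C c1(2) len_top, of m] gl1 ..
    qed
    with X show "X \<in> {act C m (ds ! i) f (xs ! i)}" by simp
  next
    fix X assume "X \<in> {act C m (ds ! i) f (xs ! i)}"
    moreover have "(i, f) \<in> bcell ds m i f" by (simp add: mem_bcell wrel_iff[OF g])
    ultimately show "X \<in> (\<lambda>(i, f). act C m (ds ! i) f (xs ! i)) ` bcell ds m i f"
      by force
  qed
  then show ?thesis by (simp add: wmap_def)
qed

lemma wmap_cmap:
  assumes g: "gl ds" and C: "cubical_set C" and w: "wdata C ds xs"
  shows "cmap (wedge ds) C (wmap C ds xs)"
  unfolding cmap_def
proof (intro conjI allI impI)
  fix n x assume "x \<in> cells (wedge ds) n"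
  then obtain i f where i: "i < length ds" "box_hom n (ds ! i) f" "x = bcell ds n i f"
    by (auto simp: cells_wedge)
  then show "wmap C ds xs n x \<in> cells C n"
    using wmap_bcell[OF g C w i(1,2)] cub_act[OF C i(2)] w by (simp add: wdata_def)
next
  fix m n h x assume a: "box_hom m n h \<and> x \<in> cells (wedge ds) n"
  then obtain i f where i: "i < length ds" "box_hom n (ds ! i) f" "x = bcell ds n i f"
    by (auto simp: cells_wedge)
  have "wmap C ds xs m (act (wedge ds) m n h x) = wmap C ds xs m (bcell ds m i (hext m (f \<circ> h)))"
    using act_wedge[OF g] a i by simp
  also have "\<dots> = act C m (ds ! i) (hext m (f \<circ> h)) (xs ! i)"
    using wmap_bcell[OF g C w i(1) bh_comp[OF i(2)]] a by simp
  also have "\<dots> = act C m n h (act C n (ds ! i) f (xs ! i))"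
    using cub_comp[OF C i(2)] a i w by (simp add: wdata_def)
  also have "\<dots> = act C m n h (wmap C ds xs n x)"
    using wmap_bcell[OF g C w i(1,2)] i by simp
  finally show "wmap C ds xs m (act (wedge ds) m n h x) = act C m n h (wmap C ds xs n x)" .
qed

lemma walpha_cell: "ds \<noteq> [] \<Longrightarrow> walpha ds \<in> cells (wedge ds) 0"
  unfolding walpha_def by (rule bcell_in_cells) (auto intro: bh_constv')

lemma womega_cell: "ds \<noteq> [] \<Longrightarrow> womega ds \<in> cells (wedge ds) 0"
  unfolding womega_def by (rule bcell_in_cells) (auto intro: bh_constv' simp: last_conv_nth)

lemma wmap_walpha:
  assumes g: "gl ds" and C: "cubical_set C" and w: "wdata C ds xs" and ne: "ds \<noteq> []"
  shows "wmap C ds xs 0 (walpha ds) = act C 0 (ds ! 0) (constv 0 (bot_v (ds ! 0))) (xs ! 0)"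
  unfolding walpha_def using ne by (intro wmap_bcell[OF g C w]) (auto intro: bh_constv')

lemma wmap_womega:
  assumes g: "gl ds" and C: "cubical_set C" and w: "wdata C ds xs" and ne: "ds \<noteq> []"
  shows "wmap C ds xs 0 (womega ds) = act C 0 (last ds) (constv 0 (top_v (last ds))) (xs ! (length ds - 1))"
proof -
  have l: "last ds = ds ! (length ds - 1)" using ne by (simp add: last_conv_nth)
  have "box_hom 0 (ds ! (length ds - 1)) (constv 0 (top_v (last ds)))"
    by (rule bh_constv') (simp add: l)
  then show ?thesis unfolding womega_def l using ne wmap_bcell[OF g C w, of "length ds - 1" 0]
    by simp
qed

definition topcell :: "nat list \<Rightarrow> nat \<Rightarrow> ncell" where
  "topcell ds k = bcell ds (ds ! k) k (hext (ds ! k) id)"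

lemma topcell_cell: "k < length ds \<Longrightarrow> topcell ds k \<in> cells (wedge ds) (ds ! k)"
  unfolding topcell_def by (rule bcell_in_cells) (auto intro: bh_id)

lemma act_topcell: "gl ds \<Longrightarrow> box_hom m (ds ! k) h \<Longrightarrow> act (wedge ds) m (ds ! k) h (topcell ds k) = bcell ds m k h"
  unfolding topcell_def by (simp add: act_wedge hext_comp_id)


definition vtx :: "nat list \<Rightarrow> nat \<Rightarrow> bool list \<Rightarrow> ncell" where
  "vtx ns i v = bcell ns 0 i (constv 0 v)"

definition VV :: "nat list \<Rightarrow> nat \<Rightarrow> bool list \<Rightarrow> bool" where
  "VV ns i v \<longleftrightarrow> i < length ns \<and> length v = ns ! i"

lemma vtx_eq_iff:
  assumes "gl ns"
  shows "vtx ns i v = vtx ns i' v' \<longleftrightarrow> (i = i' \<and> v = v') \<or>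
    (Suc i < length ns \<and> i' = Suc i \<and> v = top_v (ns ! i) \<and> v' = bot_v (ns ! i')) \<or>
    (Suc i' < length ns \<and> i = Suc i' \<and> v' = top_v (ns ! i') \<and> v = bot_v (ns ! i))"
  unfolding vtx_def bcell_eq_iff[OF assms] gp_def by (auto simp: constv_eq_iff)

lemma box_hom_0: "box_hom 0 n f \<Longrightarrow> f = constv 0 (f [])"
proof -
  assume f: "box_hom 0 n f"
  have c: "box_hom 0 n (constv 0 (f []))" using bh_constv' box_hom_len[OF f, of "[]"] by simp
  show ?thesis by (rule box_hom_eqI[OF f c]) (simp add: constv_def hext_apply)
qed

lemma cells0: "X \<in> cells (wedge ns) 0 \<longleftrightarrow> (\<exists>i v. VV ns i v \<and> X = vtx ns i v)"
proof
  assume "X \<in> cells (wedge ns) 0"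
  then obtain i f where "i < length ns" "box_hom 0 (ns ! i) f" "X = bcell ns 0 i f"
    by (auto simp: cells_wedge)
  then show "\<exists>i v. VV ns i v \<and> X = vtx ns i v"
    using box_hom_0[of "ns ! i" f] box_hom_len[of 0 "ns ! i" f "[]"]
    by (intro exI[of _ i] exI[of _ "f []"]) (auto simp: VV_def vtx_def)
next
  assume "\<exists>i v. VV ns i v \<and> X = vtx ns i v"
  then show "X \<in> cells (wedge ns) 0"
    by (auto simp: VV_def vtx_def intro!: bcell_in_cells bh_constv')
qed

lemma vtx_cell: "VV ns i v \<Longrightarrow> vtx ns i v \<in> cells (wedge ns) 0"
  using cells0 by blast

lemma in_bead_iff: "in_bead ns i x v \<longleftrightarrow> VV ns i v \<and> x = vtx ns i v"
  unfolding in_bead_def VV_def vtx_def by auto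

definition canon :: "nat list \<Rightarrow> nat \<Rightarrow> bool list \<Rightarrow> nat \<times> bool list" where
  "canon ns i v = (if v = top_v (ns ! i) \<and> Suc i < length ns then (Suc i, bot_v (ns ! Suc i)) else (i, v))"

definition iscanon :: "nat list \<Rightarrow> nat \<Rightarrow> bool list \<Rightarrow> bool" where
  "iscanon ns p c \<longleftrightarrow> \<not> (c = top_v (ns ! p) \<and> Suc p < length ns)"

lemma canon_props:
  assumes g: "gl ns" and V: "VV ns i v" and c: "canon ns i v = (p, c)"
  shows "VV ns p c" "iscanon ns p c" "vtx ns p c = vtx ns i v"
proof -
  show "VV ns p c" using V c by (auto simp: canon_def VV_def split: if_splits)
  show "iscanon ns p c" using V c g
    by (auto simp: canon_def VV_def iscanon_def gl_def bot_ne_top split: if_splits)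
  show "vtx ns p c = vtx ns i v" using V c
    by (auto simp: canon_def vtx_eq_iff[OF g] split: if_splits)
qed

lemma canon_eq_iff:
  assumes g: "gl ns" and V: "VV ns i v" "VV ns i' v'"
  shows "vtx ns i v = vtx ns i' v' \<longleftrightarrow> canon ns i v = canon ns i' v'"
proof
  assume "vtx ns i v = vtx ns i' v'"
  then show "canon ns i v = canon ns i' v'"
    using V g unfolding vtx_eq_iff[OF g]
    by (auto simp: canon_def VV_def gl_def bot_ne_top)
next
  assume e: "canon ns i v = canon ns i' v'"
  obtain p c where pc: "canon ns i v = (p, c)" by fastforce
  then have pc': "canon ns i' v' = (p, c)" using e by simp
  show "vtx ns i v = vtx ns i' v'"
    using canon_props(3)[OF g V(1) pc] canon_props(3)[OF g V(2) pc'] by simp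
qed

lemma canon_beads:
  assumes g: "gl ns" and V: "VV ns p c" and ic: "iscanon ns p c"
  shows "in_bead ns k (vtx ns p c) w \<longleftrightarrow> (k = p \<and> w = c) \<or>
     (Suc k = p \<and> c = bot_v (ns ! p) \<and> w = top_v (ns ! k))"
  unfolding in_bead_iff using V ic
  by (auto simp: vtx_eq_iff[OF g] VV_def iscanon_def)

definition lex :: "nat \<times> bool list \<Rightarrow> nat \<times> bool list \<Rightarrow> bool" where
  "lex x y \<longleftrightarrow> fst x < fst y \<or> (fst x = fst y \<and> vle (snd x) (snd y))"

lemma lex_trans: "lex x y \<Longrightarrow> lex y z \<Longrightarrow> lex x z"
  unfolding lex_def using vle_trans by auto

lemma prec_canon:
  assumes g: "gl ns" and V: "VV ns p c" "VV ns q d" and ic: "iscanon ns p c" "iscanon ns q d"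
  shows "prec ns (vtx ns p c) (vtx ns q d) \<longleftrightarrow> lex (p, c) (q, d)"
proof -
  have pos: "\<And>k. Suc k < length ns \<Longrightarrow> 0 < ns ! k \<and> 0 < ns ! Suc k" using g by (simp add: gl_def)
  show ?thesis
  proof
    assume "prec ns (vtx ns p c) (vtx ns q d)"
    then show "lex (p, c) (q, d)"
      unfolding prec_def canon_beads[OF g V(1) ic(1)] canon_beads[OF g V(2) ic(2)] lex_def
      using V ic pos
      by (auto simp: VV_def iscanon_def vle_top vle_bot vle_from_top vle_to_bot top_ne_bot bot_ne_top)
         (subgoal_tac "q = Suc i", simp, linarith)+
  next
    assume l: "lex (p, c) (q, d)"
    have ip: "in_bead ns p (vtx ns p c) c" "in_bead ns q (vtx ns q d) d"
      using V by (auto simp: in_bead_iff)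
    show "prec ns (vtx ns p c) (vtx ns q d)"
    proof (cases "p < q")
      case True
      then show ?thesis unfolding prec_def using ip by blast
    next
      case False
      then have "p = q" "vle c d" using l by (auto simp: lex_def)
      then show ?thesis unfolding prec_def using ip by blast
    qed
  qed
qed

lemma prec_iff:
  assumes g: "gl ns" and V: "VV ns i u" "VV ns j v"
  shows "prec ns (vtx ns i u) (vtx ns j v) \<longleftrightarrow> lex (canon ns i u) (canon ns j v)"
proof -
  obtain p c where pc: "canon ns i u = (p, c)" by fastforce
  obtain q d where qd: "canon ns j v = (q, d)" by fastforce
  note A = canon_props[OF g V(1) pc] and B = canon_props[OF g V(2) qd]
  show ?thesis using prec_canon[OF g A(1) B(1) A(2) B(2)] A(3) B(3) pc qd by simp
qed

lemma prec_vtx: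
  assumes "prec ns x y"
  shows "\<exists>i u. VV ns i u \<and> x = vtx ns i u" "\<exists>j v. VV ns j v \<and> y = vtx ns j v"
  using assms unfolding prec_def in_bead_iff by blast+

lemma prec_bead: "VV ns i u \<Longrightarrow> VV ns i v \<Longrightarrow> vle u v \<Longrightarrow> prec ns (vtx ns i u) (vtx ns i v)"
  unfolding prec_def in_bead_iff by blast

lemma prec_refl: "VV ns i u \<Longrightarrow> prec ns (vtx ns i u) (vtx ns i u)"
  by (rule prec_bead) auto

lemma prec_trans:
  assumes g: "gl ns" and xy: "prec ns x y" and yz: "prec ns y z"
  shows "prec ns x z"
proof -
  obtain i u where x: "VV ns i u" "x = vtx ns i u" using prec_vtx(1)[OF xy] by blast
  obtain j v where y: "VV ns j v" "y = vtx ns j v" using prec_vtx(2)[OF xy] by blast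
  obtain k w where z: "VV ns k w" "z = vtx ns k w" using prec_vtx(2)[OF yz] by blast
  have "lex (canon ns i u) (canon ns j v)" using xy x y prec_iff[OF g] by simp
  moreover have "lex (canon ns j v) (canon ns k w)" using yz y z prec_iff[OF g] by simp
  ultimately have "lex (canon ns i u) (canon ns k w)" by (rule lex_trans)
  then show ?thesis using x z prec_iff[OF g] by simp
qed


lemma vdist_pos: "vle u v \<Longrightarrow> u \<noteq> v \<Longrightarrow> 0 < vdist u v"
proof -
  assume uv: "vle u v" "u \<noteq> v"
  then have l: "length u = length v" by (simp add: vle_len)
  obtain p where p: "p < length u" "u ! p \<noteq> v ! p"
    using uv(2) l nth_equalityI by blast
  then have "v ! p \<and> \<not> u ! p" using uv(1) by (auto simp: vle_conv)
  then have "p \<in> {p. p < length u \<and> v ! p \<and> \<not> u ! p}" using p by simp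
  then show ?thesis unfolding vdist_def by (metis card_gt_0_iff empty_iff finite_Collect_conjI finite_Collect_less_nat)
qed

lemma vdist_bot_top: "vdist (bot_v n) (top_v n) = n"
proof -
  have "{p. p < length (bot_v n) \<and> top_v n ! p \<and> \<not> bot_v n ! p} = {p. p < n}"
    by (auto simp: bot_v_def top_v_def)
  then show ?thesis unfolding vdist_def by simp
qed

lemma iota_bot_top: "iota (bot_v n) (top_v n) = hext n id"
proof -
  have "\<And>x. length x = n \<Longrightarrow> fill (bot_v n) (top_v n) x = x"
  proof (induction n)
    case 0 then show ?case by (simp add: bot_v_def top_v_def)
  next
    case (Suc n)
    then obtain y ys where "x = y # ys" "length ys = n" by (cases x) auto
    with Suc.IH show ?case by (simp add: bot_v_def top_v_def)
  qed
  then show ?thesis unfolding iota_def vdist_bot_top by (intro hext_cong) simp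
qed

lemma hext0_const: "hext 0 (\<sigma> \<circ> constv 0 w) = constv 0 (\<sigma> w)"
  unfolding constv_def by (rule hext_cong) (simp add: hext_apply)

lemma act_vertex:
  assumes g: "gl ns" and w: "length w = k"
  shows "act (wedge ns) 0 k (constv 0 w) (bcell ns k l \<sigma>) = vtx ns l (\<sigma> w)"
  using act_wedge[OF g bh_constv'[OF w]] hext0_const by (simp add: vtx_def)

lemma bcell_const_eq:
  assumes g: "gl ns" and e: "vtx ns l w = vtx ns l' w'"
  shows "bcell ns m l (constv m w) = bcell ns m l' (constv m w')"
  using e unfolding vtx_eq_iff[OF g] bcell_eq_iff[OF g] gp_def by auto

lemma iota_comp_const:
  assumes uv: "vle u v" and h: "box_hom m (vdist u v) h" and e: "hext m (iota u v \<circ> h) = constv m w"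
  shows "h = constv m (proj u v w)"
proof -
  have "\<And>x. length x = m \<Longrightarrow> h x = proj u v w"
  proof -
    fix x :: "bool list" assume x: "length x = m"
    have l: "length (h x) = vdist u v" using box_hom_len[OF h x] .
    have "iota u v (h x) = w" using fun_cong[OF e, of x] x by (simp add: hext_apply constv_def)
    then have "fill u v (h x) = w" using l by (simp add: iota_def hext_apply)
    then show "h x = proj u v w" using proj_fill[OF uv l] by simp
  qed
  then show ?thesis unfolding constv_def using box_hom_hext[OF h] by (metis hext_cong)
qed

definition ivl :: "nat list \<Rightarrow> nat \<Rightarrow> nat \<Rightarrow> (nat \<Rightarrow> bool list) \<Rightarrow> (nat \<Rightarrow> bool list) \<Rightarrow> bool" where
  "ivl ns i j L U \<longleftrightarrow> necklace ns \<and> i \<le> j \<and> j < length ns \<and>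
     (\<forall>p \<le> j - i. length (L p) = ns ! (i + p) \<and> length (U p) = ns ! (i + p) \<and> vle (L p) (U p)) \<and>
     (\<forall>p. 0 < p \<and> p \<le> j - i \<longrightarrow> L p = bot_v (ns ! (i + p))) \<and>
     (\<forall>p < j - i. U p = top_v (ns ! (i + p))) \<and>
     (i < j \<longrightarrow> L 0 \<noteq> U 0 \<and> L (j - i) \<noteq> U (j - i))"

definition ivl_es :: "(nat \<Rightarrow> bool list) \<Rightarrow> (nat \<Rightarrow> bool list) \<Rightarrow> nat \<Rightarrow> nat list" where
  "ivl_es L U n = map (\<lambda>p. vdist (L p) (U p)) [0..<Suc n]"

definition ivl_zs :: "nat list \<Rightarrow> nat \<Rightarrow> (nat \<Rightarrow> bool list) \<Rightarrow> (nat \<Rightarrow> bool list) \<Rightarrow> nat \<Rightarrow> ncell list" where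
  "ivl_zs ns i L U n = map (\<lambda>p. bcell ns (vdist (L p) (U p)) (i + p) (iota (L p) (U p))) [0..<Suc n]"

definition btw :: "nat list \<Rightarrow> nat \<Rightarrow> nat \<Rightarrow> (nat \<Rightarrow> bool list) \<Rightarrow> (nat \<Rightarrow> bool list) \<Rightarrow> ncell \<Rightarrow> ncell \<Rightarrow> bool" where
  "btw ns i j L U a b \<longleftrightarrow> (\<forall>x. prec ns a x \<and> prec ns x b \<longrightarrow>
      (\<exists>p \<le> j - i. \<exists>w. VV ns (i + p) w \<and> x = vtx ns (i + p) w \<and> vle (L p) w \<and> vle w (U p)))"

context
  fixes ns i j L U
  assumes I: "ivl ns i j L U"
begin

abbreviation "nn \<equiv> j - i"
abbreviation "es \<equiv> ivl_es L U nn"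
abbreviation "zs \<equiv> ivl_zs ns i L U nn"
abbreviation "tt \<equiv> wmap (wedge ns) es zs"

lemma I_neck: "necklace ns" and I_gl: "gl ns" and I_ij: "i \<le> j" "j < length ns"
  using I necklace_gl unfolding ivl_def by auto

lemma I_len: "p \<le> nn \<Longrightarrow> length (L p) = ns ! (i + p) \<and> length (U p) = ns ! (i + p) \<and> vle (L p) (U p)"
  using I unfolding ivl_def by auto

lemma I_L: "0 < p \<Longrightarrow> p \<le> nn \<Longrightarrow> L p = bot_v (ns ! (i + p))"
  using I unfolding ivl_def by auto

lemma I_U: "p < nn \<Longrightarrow> U p = top_v (ns ! (i + p))"
  using I unfolding ivl_def by auto

lemma I_ends: "i < j \<Longrightarrow> L 0 \<noteq> U 0 \<and> L nn \<noteq> U nn"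
  using I unfolding ivl_def by auto

lemma es_len: "length es = Suc nn"
  by (simp add: ivl_es_def)

lemma es_nth: "p \<le> nn \<Longrightarrow> es ! p = vdist (L p) (U p)"
  unfolding ivl_es_def by (simp del: upt_Suc add: nth_map_upt)

lemma zs_nth: "p \<le> nn \<Longrightarrow> zs ! p = bcell ns (vdist (L p) (U p)) (i + p) (iota (L p) (U p))"
  unfolding ivl_zs_def by (simp del: upt_Suc add: nth_map_upt)

lemma ns_pos: "i < j \<Longrightarrow> k < length ns \<Longrightarrow> 0 < ns ! k"
  using I_neck I_ij unfolding necklace_def by (auto simp: nth_mem)

lemma LU_ne: "i < j \<Longrightarrow> p \<le> nn \<Longrightarrow> L p \<noteq> U p"
proof -
  assume ij: "i < j" and p: "p \<le> nn"
  show "L p \<noteq> U p"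
  proof (cases "p = 0 \<or> p = nn")
    case True then show ?thesis using I_ends[OF ij] by auto
  next
    case False
    then have "L p = bot_v (ns ! (i + p))" "U p = top_v (ns ! (i + p))" using I_L I_U p by auto
    moreover have "0 < ns ! (i + p)" using ns_pos[OF ij] p I_ij by auto
    ultimately show ?thesis using bot_ne_top by auto
  qed
qed

lemma es_necklace: "necklace es"
proof (cases "i < j")
  case True
  have "\<forall>d\<in>set es. 0 < d"
    using vdist_pos I_len LU_ne[OF True] by (auto simp: ivl_es_def simp del: upt_Suc)
  then show ?thesis unfolding necklace_def by (auto simp: ivl_es_def simp del: upt_Suc)
next
  case False
  then have "j = i" using I_ij by auto
  then have "es = [vdist (L 0) (U 0)]" by (simp add: ivl_es_def)
  then show ?thesis unfolding necklace_def by auto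
qed

lemma es_gl: "gl es" using es_necklace necklace_gl by blast

lemma zs_wdata: "wdata (wedge ns) es zs"
  unfolding wdata_def
proof (intro conjI allI impI)
  fix p assume "p < length es"
  then have p: "p \<le> nn" using es_len by simp
  show "zs ! p \<in> cells (wedge ns) (es ! p)"
    unfolding zs_nth[OF p] es_nth[OF p]
    using I_len[OF p] I_ij p by (intro bcell_in_cells) (auto dest: bh_iota)
next
  fix p assume "Suc p < length es"
  then have p: "p < nn" using es_len by simp
  have p1: "p \<le> nn" "Suc p \<le> nn" using p by auto
  have a1: "act (wedge ns) 0 (es ! p) (constv 0 (top_v (es ! p))) (zs ! p) = vtx ns (i + p) (U p)"
    unfolding zs_nth[OF p1(1)] es_nth[OF p1(1)] act_vertex[OF I_gl len_top]
    using I_len[OF p1(1)] fill_top by (simp add: iota_def hext_apply)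
  have a2: "act (wedge ns) 0 (es ! Suc p) (constv 0 (bot_v (es ! Suc p))) (zs ! Suc p) = vtx ns (i + Suc p) (L (Suc p))"
    unfolding zs_nth[OF p1(2)] es_nth[OF p1(2)] act_vertex[OF I_gl len_bot]
    using I_len[OF p1(2)] fill_bot by (simp add: iota_def hext_apply)
  have "vtx ns (i + p) (U p) = vtx ns (i + Suc p) (L (Suc p))"
    using I_U[OF p] I_L[of "Suc p"] p I_ij unfolding vtx_eq_iff[OF I_gl] by auto
  then show "act (wedge ns) 0 (es ! p) (constv 0 (top_v (es ! p))) (zs ! p) =
    act (wedge ns) 0 (es ! Suc p) (constv 0 (bot_v (es ! Suc p))) (zs ! Suc p)"
    using a1 a2 by simp
qed


lemma cub_ns: "cubical_set (wedge ns)" using wedge_cubical[OF I_gl] .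
lemma cub_es: "cubical_set (wedge es)" using wedge_cubical[OF es_gl] .

lemma t_cmap: "cmap (wedge es) (wedge ns) tt"
  by (rule wmap_cmap[OF es_gl cub_ns zs_wdata])

lemma t_bcell:
  assumes p: "p \<le> nn" and h: "box_hom m (vdist (L p) (U p)) h"
  shows "tt m (bcell es m p h) = bcell ns m (i + p) (hext m (iota (L p) (U p) \<circ> h))"
proof -
  have "tt m (bcell es m p h) = act (wedge ns) m (es ! p) h (zs ! p)"
    using p h es_len es_nth[OF p] by (intro wmap_bcell[OF es_gl cub_ns zs_wdata]) auto
  also have "\<dots> = bcell ns m (i + p) (hext m (iota (L p) (U p) \<circ> h))"
    unfolding zs_nth[OF p] es_nth[OF p] by (rule act_wedge[OF I_gl h])
  finally show ?thesis .
qed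

lemma es_ne: "es \<noteq> []" using es_len by auto

lemma t_alpha: "tt 0 (walpha es) = vtx ns i (L 0)"
proof -
  have "tt 0 (walpha es) = act (wedge ns) 0 (es ! 0) (constv 0 (bot_v (es ! 0))) (zs ! 0)"
    by (rule wmap_walpha[OF es_gl cub_ns zs_wdata es_ne])
  also have "\<dots> = vtx ns i (L 0)"
    unfolding zs_nth[of 0, simplified] es_nth[of 0, simplified] act_vertex[OF I_gl len_bot]
    using I_len[of 0] fill_bot[of "L 0" "U 0"] by (simp add: iota_def hext_apply)
  finally show ?thesis .
qed

lemma t_omega: "tt 0 (womega es) = vtx ns j (U nn)"
proof -
  have ls: "last es = es ! nn" "length es - 1 = nn" using es_len es_ne by (auto simp: last_conv_nth)
  have "tt 0 (womega es) = act (wedge ns) 0 (last es) (constv 0 (top_v (last es))) (zs ! (length es - 1))"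
    by (rule wmap_womega[OF es_gl cub_ns zs_wdata es_ne])
  also have "\<dots> = vtx ns (i + nn) (U nn)"
    unfolding ls zs_nth[of nn, simplified] es_nth[of nn, simplified] act_vertex[OF I_gl len_top]
    using I_len[of nn] fill_top[of "L nn" "U nn"] by (simp add: iota_def hext_apply)
  finally show ?thesis using I_ij by simp
qed

lemma es_cell: "X \<in> cells (wedge es) m \<Longrightarrow> \<exists>p h. p \<le> nn \<and> box_hom m (vdist (L p) (U p)) h \<and> X = bcell es m p h"
  unfolding cells_wedge using es_len es_nth by (metis less_Suc_eq_le)

lemma t_inj:
  assumes X: "X \<in> cells (wedge es) m" and Y: "Y \<in> cells (wedge es) m" and e: "tt m X = tt m Y"
  shows "X = Y"
proof -
  obtain p h where ph: "p \<le> nn" "box_hom m (vdist (L p) (U p)) h" "X = bcell es m p h" using es_cell[OF X] by blast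
  obtain q k where qk: "q \<le> nn" "box_hom m (vdist (L q) (U q)) k" "Y = bcell es m q k" using es_cell[OF Y] by blast
  have eq: "bcell ns m (i + p) (hext m (iota (L p) (U p) \<circ> h)) = bcell ns m (i + q) (hext m (iota (L q) (U q) \<circ> k))"
    using e ph qk t_bcell by simp
  note lp = I_len[OF ph(1)] and lq = I_len[OF qk(1)]
  from eq[unfolded bcell_eq_iff[OF I_gl]] show ?thesis
  proof (elim disjE)
    assume a: "(i + p, hext m (iota (L p) (U p) \<circ> h)) = (i + q, hext m (iota (L q) (U q) \<circ> k))"
    then have pq: "p = q" by simp
    have "\<And>x. length x = m \<Longrightarrow> h x = k x"
    proof -
      fix x :: "bool list" assume x: "length x = m"
      have "iota (L p) (U p) (h x) = iota (L p) (U p) (k x)"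
        using fun_cong[OF a[unfolded pq prod.inject, THEN conjunct2], of x] x pq by (simp add: hext_apply)
      then show "h x = k x" using iota_inj[OF lp[THEN conjunct2, THEN conjunct2]] box_hom_len[OF ph(2) x] box_hom_len[OF qk(2) x] pq
        by blast
    qed
    then have "h = k" using box_hom_eqI[OF ph(2)] qk(2) pq by blast
    then show ?thesis using ph qk pq by simp
  next
    assume "gp ns m (i + p, hext m (iota (L p) (U p) \<circ> h)) (i + q, hext m (iota (L q) (U q) \<circ> k))"
    then have q: "q = Suc p" and c1: "hext m (iota (L p) (U p) \<circ> h) = constv m (top_v (length (L p)))"
      and c2: "hext m (iota (L q) (U q) \<circ> k) = constv m (bot_v (length (L q)))"
      unfolding gp_def using lp lq by auto
    have h1: "h = constv m (top_v (es ! p))"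
      using iota_comp_const[OF lp[THEN conjunct2, THEN conjunct2] ph(2) c1] proj_top[of "L p" "U p"] lp es_nth[OF ph(1)] by simp
    have k1: "k = constv m (bot_v (es ! q))"
      using iota_comp_const[OF lq[THEN conjunct2, THEN conjunct2] qk(2) c2] proj_bot[of "L q" "U q"] lq es_nth[OF qk(1)] by simp
    show ?thesis unfolding ph(3) qk(3) bcell_eq_iff[OF es_gl] gp_def h1 k1 q using qk(1) q es_len by auto
  next
    assume "gp ns m (i + q, hext m (iota (L q) (U q) \<circ> k)) (i + p, hext m (iota (L p) (U p) \<circ> h))"
    then have q: "p = Suc q" and c1: "hext m (iota (L q) (U q) \<circ> k) = constv m (top_v (length (L q)))"
      and c2: "hext m (iota (L p) (U p) \<circ> h) = constv m (bot_v (length (L p)))"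
      unfolding gp_def using lp lq by auto
    have h1: "k = constv m (top_v (es ! q))"
      using iota_comp_const[OF lq[THEN conjunct2, THEN conjunct2] qk(2) c1] proj_top[of "L q" "U q"] lq es_nth[OF qk(1)] by simp
    have k1: "h = constv m (bot_v (es ! p))"
      using iota_comp_const[OF lp[THEN conjunct2, THEN conjunct2] ph(2) c2] proj_bot[of "L p" "U p"] lp es_nth[OF ph(1)] by simp
    show ?thesis unfolding ph(3) qk(3) bcell_eq_iff[OF es_gl] gp_def h1 k1 q using ph(1) q es_len by auto
  qed
qed


lemma t_factor:
  assumes B: "btw ns i j L U a b"
    and l: "l < length ns" and \<sigma>: "box_hom m (ns ! l) \<sigma>"
    and Pa: "prec ns a (vtx ns l (\<sigma> (bot_v m)))" and Pb: "prec ns (vtx ns l (\<sigma> (top_v m))) b"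
  shows "\<exists>Y \<in> cells (wedge es) m. tt m Y = bcell ns m l \<sigma>"
proof -
  let ?sb = "\<sigma> (bot_v m)" and ?st = "\<sigma> (top_v m)"
  have lens: "\<And>x. length x = m \<Longrightarrow> length (\<sigma> x) = ns ! l" using box_hom_len[OF \<sigma>] .
  have mono: "\<And>x. length x = m \<Longrightarrow> vle ?sb (\<sigma> x) \<and> vle (\<sigma> x) ?st"
    using box_hom_mono[OF \<sigma>] by (simp add: vle_bot vle_top)
  have VVx: "\<And>x. length x = m \<Longrightarrow> VV ns l (\<sigma> x)" using lens l by (simp add: VV_def)
  have btwx: "\<And>x. length x = m \<Longrightarrow> prec ns a (vtx ns l (\<sigma> x)) \<and> prec ns (vtx ns l (\<sigma> x)) b"
  proof -
    fix x :: "bool list" assume x: "length x = m"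
    have "prec ns (vtx ns l ?sb) (vtx ns l (\<sigma> x))" "prec ns (vtx ns l (\<sigma> x)) (vtx ns l ?st)"
      using prec_bead VVx mono x by auto
    then show "prec ns a (vtx ns l (\<sigma> x)) \<and> prec ns (vtx ns l (\<sigma> x)) b"
      using prec_trans[OF I_gl] Pa Pb by blast
  qed
  have key: "\<exists>p \<sigma>'. p \<le> nn \<and> box_hom m (ns ! (i + p)) \<sigma>' \<and> bcell ns m l \<sigma> = bcell ns m (i + p) \<sigma>' \<and>
      (\<forall>x. length x = m \<longrightarrow> vle (L p) (\<sigma>' x) \<and> vle (\<sigma>' x) (U p))"
  proof (cases "?sb = ?st")
    case True
    have sc: "\<sigma> = constv m ?sb"
    proof (rule box_hom_eqI[OF \<sigma>])
      show "box_hom m (ns ! l) (constv m ?sb)" using lens[of "bot_v m"] by (intro bh_constv') simp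
      fix x :: "bool list" assume x: "length x = m"
      show "\<sigma> x = constv m ?sb x" using mono[OF x] True vle_antisym x by (simp add: constv_def hext_apply)
    qed
    obtain p w where pw: "p \<le> nn" "VV ns (i + p) w" "vtx ns l ?sb = vtx ns (i + p) w" "vle (L p) w" "vle w (U p)"
      using B btwx[of "bot_v m"] unfolding btw_def by (metis len_bot)
    have "bcell ns m l \<sigma> = bcell ns m (i + p) (constv m w)"
      using sc bcell_const_eq[OF I_gl pw(3)] by metis
    moreover have "box_hom m (ns ! (i + p)) (constv m w)" using pw(2) by (intro bh_constv') (simp add: VV_def)
    ultimately show ?thesis using pw by (intro exI[of _ p] exI[of _ "constv m w"]) (simp add: constv_def hext_apply)
  next
    case False
    obtain p0 w0 where p0: "p0 \<le> nn" "VV ns (i + p0) w0" "vtx ns l ?sb = vtx ns (i + p0) w0" "vle (L p0) w0" "vle w0 (U p0)"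
      using B btwx[of "bot_v m"] unfolding btw_def by (metis len_bot)
    obtain p1 w1 where p1: "p1 \<le> nn" "VV ns (i + p1) w1" "vtx ns l ?st = vtx ns (i + p1) w1" "vle (L p1) w1" "vle w1 (U p1)"
      using B btwx[of "top_v m"] unfolding btw_def by (metis len_top)
    have sbst: "vle ?sb ?st" using mono[of "bot_v m"] by simp
    have c0: "(l = i + p0 \<and> ?sb = w0) \<or> (l = Suc (i + p0) \<and> ?sb = bot_v (ns ! l))"
      using p0(3)[unfolded vtx_eq_iff[OF I_gl]] False sbst vle_from_top by auto
    have c1: "(l = i + p1 \<and> ?st = w1) \<or> (Suc l = i + p1 \<and> ?st = top_v (ns ! l))"
      using p1(3)[unfolded vtx_eq_iff[OF I_gl]] False sbst vle_to_bot by auto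
    have ls: "length ?sb = ns ! l" "length ?st = ns ! l" using lens by auto
    have bounds: "i \<le> l \<and> l - i \<le> nn \<and> vle (L (l - i)) ?sb \<and> vle ?st (U (l - i))"
      using c0 c1
    proof (elim disjE conjE)
      assume "l = i + p0" "?sb = w0" "l = i + p1" "?st = w1"
      then show ?thesis using p0 p1 by simp
    next
      assume a: "l = i + p0" "?sb = w0" "Suc l = i + p1" "?st = top_v (ns ! l)"
      then have "l - i < nn" using p1(1) by simp
      then show ?thesis using a p0 I_U[of "l - i"] ls by (simp add: vle_top)
    next
      assume a: "l = Suc (i + p0)" "?sb = bot_v (ns ! l)" "l = i + p1" "?st = w1"
      then show ?thesis using p1 I_L[of "l - i"] ls by (simp add: vle_bot)
    next
      assume a: "l = Suc (i + p0)" "?sb = bot_v (ns ! l)" "Suc l = i + p1" "?st = top_v (ns ! l)"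
      then have "l - i < nn" "0 < l - i" using p1(1) by auto
      then show ?thesis using a I_U[of "l - i"] I_L[of "l - i"] ls by (simp add: vle_top vle_bot)
    qed
    then have "l = i + (l - i)" by simp
    then show ?thesis using bounds \<sigma> mono vle_trans
      by (intro exI[of _ "l - i"] exI[of _ \<sigma>]) (metis)
  qed
  then obtain p \<sigma>' where ps: "p \<le> nn" "box_hom m (ns ! (i + p)) \<sigma>'" "bcell ns m l \<sigma> = bcell ns m (i + p) \<sigma>'"
      "\<And>x. length x = m \<Longrightarrow> vle (L p) (\<sigma>' x) \<and> vle (\<sigma>' x) (U p)" by blast
  obtain \<tau> where \<tau>: "box_hom m (vdist (L p) (U p)) \<tau>" "\<sigma>' = hext m (iota (L p) (U p) \<circ> \<tau>)"
    using bh_factor[OF ps(2) _ _ ps(4)] I_len[OF ps(1)] by blast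
  have "bcell es m p \<tau> \<in> cells (wedge es) m"
    using ps(1) es_len es_nth[OF ps(1)] \<tau>(1) by (intro bcell_in_cells) auto
  moreover have "tt m (bcell es m p \<tau>) = bcell ns m l \<sigma>"
    using t_bcell[OF ps(1) \<tau>(1)] \<tau>(2) ps(3) by simp
  ultimately show ?thesis by blast
qed


lemma vtx_topcell: "gl ds \<Longrightarrow> length w = ds ! k \<Longrightarrow> act (wedge ds) 0 (ds ! k) (constv 0 w) (topcell ds k) = vtx ds k w"
  using act_topcell[of ds 0 k "constv 0 w"] bh_constv'[of w "ds ! k" 0] by (simp add: vtx_def)

lemma ivl_terminal:
  assumes a: "a = vtx ns i (L 0)" and b: "b = vtx ns j (U nn)" and B: "btw ns i j L U a b"
  shows "nec_terminal (wedge ns) a b es tt"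
  unfolding nec_terminal_def
proof (intro conjI allI impI)
  show "nec_obj (wedge ns) a b es tt"
    unfolding nec_obj_def using es_necklace t_cmap t_alpha t_omega a b by simp
next
  fix ds f assume F: "nec_obj (wedge ns) a b ds f"
  have gds: "gl ds" and ne: "ds \<noteq> []" and fc: "cmap (wedge ds) (wedge ns) f"
    and fa: "f 0 (walpha ds) = a" and fb: "f 0 (womega ds) = b"
    using F necklace_gl unfolding nec_obj_def necklace_def by auto
  define x where "x k = f (ds ! k) (topcell ds k)" for k
  have xc: "\<And>k. k < length ds \<Longrightarrow> x k \<in> cells (wedge ns) (ds ! k)"
    unfolding x_def using cmap_cells[OF fc topcell_cell] .
  have "\<forall>k. \<exists>p. k < length ds \<longrightarrow> fst p < length ns \<and> box_hom (ds ! k) (ns ! fst p) (snd p) \<and> x k = bcell ns (ds ! k) (fst p) (snd p)"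
    using xc unfolding cells_wedge by fastforce
  then obtain P where P: "\<And>k. k < length ds \<Longrightarrow> fst (P k) < length ns \<and> box_hom (ds ! k) (ns ! fst (P k)) (snd (P k)) \<and> x k = bcell ns (ds ! k) (fst (P k)) (snd (P k))"
    by metis
  define lf where "lf k = fst (P k)" for k
  define sf where "sf k = snd (P k)" for k
  have LS: "\<And>k. k < length ds \<Longrightarrow> lf k < length ns \<and> box_hom (ds ! k) (ns ! lf k) (sf k) \<and> x k = bcell ns (ds ! k) (lf k) (sf k)"
    using P unfolding lf_def sf_def by blast
  have fv0: "\<And>k w. k < length ds \<Longrightarrow> length w = ds ! k \<Longrightarrow> f 0 (vtx ds k w) = act (wedge ns) 0 (ds ! k) (constv 0 w) (x k)"
    unfolding x_def using cmap_act[OF fc bh_constv' topcell_cell] vtx_topcell[OF gds] by metis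
  have fv: "\<And>k w. k < length ds \<Longrightarrow> length w = ds ! k \<Longrightarrow> f 0 (vtx ds k w) = vtx ns (lf k) (sf k w)"
    using fv0 LS act_vertex[OF I_gl] by metis
  have VVs: "\<And>k w. k < length ds \<Longrightarrow> length w = ds ! k \<Longrightarrow> VV ns (lf k) (sf k w)"
    using LS box_hom_len unfolding VV_def by blast
  have pbt: "\<And>k. k < length ds \<Longrightarrow> prec ns (vtx ns (lf k) (sf k (bot_v (ds ! k)))) (vtx ns (lf k) (sf k (top_v (ds ! k))))"
  proof -
    fix k assume k: "k < length ds"
    have vl: "vle (sf k (bot_v (ds ! k))) (sf k (top_v (ds ! k)))"
      using box_hom_mono[OF LS[OF k, THEN conjunct2, THEN conjunct1], of "bot_v (ds ! k)" "top_v (ds ! k)"]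
      by (simp add: vle_bot)
    have v1: "VV ns (lf k) (sf k (bot_v (ds ! k)))" "VV ns (lf k) (sf k (top_v (ds ! k)))"
      using VVs[OF k] by simp_all
    show "prec ns (vtx ns (lf k) (sf k (bot_v (ds ! k)))) (vtx ns (lf k) (sf k (top_v (ds ! k))))"
      by (rule prec_bead[OF v1 vl])
  qed
  have glue_ds: "\<And>k. Suc k < length ds \<Longrightarrow> vtx ds k (top_v (ds ! k)) = vtx ds (Suc k) (bot_v (ds ! Suc k))"
    unfolding vtx_eq_iff[OF gds] by simp
  have Pa: "\<And>k. k < length ds \<Longrightarrow> prec ns a (vtx ns (lf k) (sf k (bot_v (ds ! k))))"
  proof -
    fix k show "k < length ds \<Longrightarrow> prec ns a (vtx ns (lf k) (sf k (bot_v (ds ! k))))"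
    proof (induction k)
      case 0
      have "a = vtx ns (lf 0) (sf 0 (bot_v (ds ! 0)))"
        using fa fv[of 0 "bot_v (ds ! 0)"] 0 by (simp add: walpha_def vtx_def)
      then show ?case using prec_refl VVs[of 0 "bot_v (ds ! 0)"] 0 by simp
    next
      case (Suc k)
      have "vtx ns (lf (Suc k)) (sf (Suc k) (bot_v (ds ! Suc k))) = vtx ns (lf k) (sf k (top_v (ds ! k)))"
        using fv[of "Suc k" "bot_v (ds ! Suc k)"] fv[of k "top_v (ds ! k)"] glue_ds[OF Suc.prems] Suc.prems by simp
      then show ?case using prec_trans[OF I_gl Suc.IH pbt] Suc.prems by simp
    qed
  qed
  have Pb': "\<And>d k. k < length ds \<Longrightarrow> length ds - 1 - k = d \<Longrightarrow> prec ns (vtx ns (lf k) (sf k (top_v (ds ! k)))) b"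
  proof -
    fix d show "\<And>k. k < length ds \<Longrightarrow> length ds - 1 - k = d \<Longrightarrow> prec ns (vtx ns (lf k) (sf k (top_v (ds ! k)))) b"
    proof (induction d)
      case 0
      then have k: "k = length ds - 1" by simp
      have "b = vtx ns (lf k) (sf k (top_v (ds ! k)))"
        using fb fv[of k "top_v (ds ! k)"] 0 k ne by (simp add: womega_def vtx_def last_conv_nth)
      then show ?case using prec_refl VVs[of k "top_v (ds ! k)"] 0 by simp
    next
      case (Suc d)
      then have k: "Suc k < length ds" "length ds - 1 - Suc k = d" by auto
      have "vtx ns (lf (Suc k)) (sf (Suc k) (bot_v (ds ! Suc k))) = vtx ns (lf k) (sf k (top_v (ds ! k)))"
        using fv[of "Suc k" "bot_v (ds ! Suc k)"] fv[of k "top_v (ds ! k)"] glue_ds[OF k(1)] k by simp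
      then show ?case using prec_trans[OF I_gl pbt[OF k(1)] Suc.IH[OF k]] by simp
    qed
  qed
  have Pb: "\<And>k. k < length ds \<Longrightarrow> prec ns (vtx ns (lf k) (sf k (top_v (ds ! k)))) b"
    using Pb' by blast
  have fac: "\<And>k. k < length ds \<Longrightarrow> \<exists>Y \<in> cells (wedge es) (ds ! k). tt (ds ! k) Y = x k"
  proof -
    fix k assume k: "k < length ds"
    note lk = LS[OF k]
    show "\<exists>Y \<in> cells (wedge es) (ds ! k). tt (ds ! k) Y = x k"
      using t_factor[OF B lk[THEN conjunct1] lk[THEN conjunct2, THEN conjunct1] Pa[OF k] Pb[OF k]]
        lk[THEN conjunct2, THEN conjunct2] by simp
  qed
  define ys where "ys = map (\<lambda>k. SOME Y. Y \<in> cells (wedge es) (ds ! k) \<and> tt (ds ! k) Y = x k) [0..<length ds]"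
  have YS: "\<And>k. k < length ds \<Longrightarrow> ys ! k \<in> cells (wedge es) (ds ! k) \<and> tt (ds ! k) (ys ! k) = x k"
  proof -
    fix k assume k: "k < length ds"
    have "ys ! k = (SOME Y. Y \<in> cells (wedge es) (ds ! k) \<and> tt (ds ! k) Y = x k)"
      unfolding ys_def using k by simp
    then show "ys ! k \<in> cells (wedge es) (ds ! k) \<and> tt (ds ! k) (ys ! k) = x k"
      using someI_ex[OF fac[OF k, unfolded Bex_def]] by simp
  qed
  have tY: "\<And>k w. k < length ds \<Longrightarrow> length w = ds ! k \<Longrightarrow>
      tt 0 (act (wedge es) 0 (ds ! k) (constv 0 w) (ys ! k)) = f 0 (vtx ds k w)"
  proof -
    fix k and w :: "bool list" assume k: "k < length ds" and w: "length w = ds ! k"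
    have "tt 0 (act (wedge es) 0 (ds ! k) (constv 0 w) (ys ! k)) = act (wedge ns) 0 (ds ! k) (constv 0 w) (tt (ds ! k) (ys ! k))"
      by (rule cmap_act[OF t_cmap bh_constv'[OF w] YS[OF k, THEN conjunct1]])
    also have "\<dots> = f 0 (vtx ds k w)" using YS[OF k] fv0[OF k w] by simp
    finally show "tt 0 (act (wedge es) 0 (ds ! k) (constv 0 w) (ys ! k)) = f 0 (vtx ds k w)" .
  qed
  have aYc: "\<And>k w. k < length ds \<Longrightarrow> length w = ds ! k \<Longrightarrow>
      act (wedge es) 0 (ds ! k) (constv 0 w) (ys ! k) \<in> cells (wedge es) 0"
  proof -
    fix k and w :: "bool list" assume k: "k < length ds" and w: "length w = ds ! k"
    show "act (wedge es) 0 (ds ! k) (constv 0 w) (ys ! k) \<in> cells (wedge es) 0"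
      by (rule cub_act[OF cub_es bh_constv'[OF w] YS[OF k, THEN conjunct1]])
  qed
  have wd: "wdata (wedge es) ds ys"
    unfolding wdata_def
  proof (intro conjI allI impI)
    fix k assume k: "k < length ds" show "ys ! k \<in> cells (wedge es) (ds ! k)" using YS[OF k] by (rule conjunct1)
  next
    fix k assume k: "Suc k < length ds"
    show "act (wedge es) 0 (ds ! k) (constv 0 (top_v (ds ! k))) (ys ! k) =
          act (wedge es) 0 (ds ! Suc k) (constv 0 (bot_v (ds ! Suc k))) (ys ! Suc k)"
    proof (rule t_inj)
      have k0: "k < length ds" using k by simp
      show "act (wedge es) 0 (ds ! k) (constv 0 (top_v (ds ! k))) (ys ! k) \<in> cells (wedge es) 0"
        by (rule aYc[OF k0]) simp
      show "act (wedge es) 0 (ds ! Suc k) (constv 0 (bot_v (ds ! Suc k))) (ys ! Suc k) \<in> cells (wedge es) 0"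
        by (rule aYc[OF k]) simp
      have "tt 0 (act (wedge es) 0 (ds ! k) (constv 0 (top_v (ds ! k))) (ys ! k)) = f 0 (vtx ds k (top_v (ds ! k)))"
        by (rule tY[OF k0]) simp
      also have "\<dots> = f 0 (vtx ds (Suc k) (bot_v (ds ! Suc k)))" using glue_ds[OF k] by simp
      also have "\<dots> = tt 0 (act (wedge es) 0 (ds ! Suc k) (constv 0 (bot_v (ds ! Suc k))) (ys ! Suc k))"
        by (rule tY[OF k, symmetric]) simp
      finally show "tt 0 (act (wedge es) 0 (ds ! k) (constv 0 (top_v (ds ! k))) (ys ! k)) =
         tt 0 (act (wedge es) 0 (ds ! Suc k) (constv 0 (bot_v (ds ! Suc k))) (ys ! Suc k))" .
    qed
  qed
  define g where "g = wmap (wedge es) ds ys"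
  have gc: "cmap (wedge ds) (wedge es) g" unfolding g_def by (rule wmap_cmap[OF gds cub_es wd])
  have ga: "g 0 (walpha ds) = walpha es"
  proof -
    have n0: "0 < length ds" using ne by simp
    have "g 0 (walpha ds) = act (wedge es) 0 (ds ! 0) (constv 0 (bot_v (ds ! 0))) (ys ! 0)"
      unfolding g_def by (rule wmap_walpha[OF gds cub_es wd ne])
    also have "\<dots> = walpha es"
    proof (rule t_inj)
      show "act (wedge es) 0 (ds ! 0) (constv 0 (bot_v (ds ! 0))) (ys ! 0) \<in> cells (wedge es) 0"
        by (rule aYc[OF n0]) simp
      show "walpha es \<in> cells (wedge es) 0" by (rule walpha_cell[OF es_ne])
      have "tt 0 (act (wedge es) 0 (ds ! 0) (constv 0 (bot_v (ds ! 0))) (ys ! 0)) = f 0 (vtx ds 0 (bot_v (ds ! 0)))"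
        by (rule tY[OF n0]) simp
      also have "\<dots> = a" using fa by (simp add: walpha_def vtx_def)
      also have "\<dots> = tt 0 (walpha es)" using t_alpha a by simp
      finally show "tt 0 (act (wedge es) 0 (ds ! 0) (constv 0 (bot_v (ds ! 0))) (ys ! 0)) = tt 0 (walpha es)" .
    qed
    finally show ?thesis .
  qed
  have gb: "g 0 (womega ds) = womega es"
  proof -
    define k where "k = length ds - 1"
    have l: "last ds = ds ! k" "k < length ds" using ne by (auto simp: last_conv_nth k_def)
    have "g 0 (womega ds) = act (wedge es) 0 (last ds) (constv 0 (top_v (last ds))) (ys ! (length ds - 1))"
      unfolding g_def by (rule wmap_womega[OF gds cub_es wd ne])
    also have "\<dots> = act (wedge es) 0 (ds ! k) (constv 0 (top_v (ds ! k))) (ys ! k)"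
      using l by (simp add: k_def)
    also have "\<dots> = womega es"
    proof (rule t_inj)
      show "act (wedge es) 0 (ds ! k) (constv 0 (top_v (ds ! k))) (ys ! k) \<in> cells (wedge es) 0"
        by (rule aYc[OF l(2)]) simp
      show "womega es \<in> cells (wedge es) 0" by (rule womega_cell[OF es_ne])
      have "tt 0 (act (wedge es) 0 (ds ! k) (constv 0 (top_v (ds ! k))) (ys ! k)) = f 0 (vtx ds k (top_v (ds ! k)))"
        by (rule tY[OF l(2)]) simp
      also have "\<dots> = b" using fb l by (simp add: womega_def vtx_def k_def)
      also have "\<dots> = tt 0 (womega es)" using t_omega b by simp
      finally show "tt 0 (act (wedge es) 0 (ds ! k) (constv 0 (top_v (ds ! k))) (ys ! k)) = tt 0 (womega es)" .
    qed
    finally show ?thesis .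
  qed
  have ov: "over ds tt g f"
    unfolding over_def
  proof (intro allI impI)
    fix m X assume "X \<in> cells (wedge ds) m"
    then obtain k h where kh: "k < length ds" "box_hom m (ds ! k) h" "X = bcell ds m k h"
      by (auto simp: cells_wedge)
    have "tt m (g m X) = tt m (act (wedge es) m (ds ! k) h (ys ! k))"
      unfolding g_def kh(3) using wmap_bcell[OF gds cub_es wd kh(1,2)] by simp
    also have "\<dots> = act (wedge ns) m (ds ! k) h (x k)"
      using cmap_act[OF t_cmap kh(2)] YS[OF kh(1)] by simp
    also have "\<dots> = f m (act (wedge ds) m (ds ! k) h (topcell ds k))"
      unfolding x_def using cmap_act[OF fc kh(2) topcell_cell[OF kh(1)]] by simp
    also have "\<dots> = f m X" using act_topcell[OF gds kh(2)] kh(3) by simp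
    finally show "tt m (g m X) = f m X" .
  qed
  show "\<exists>g. nec_hom ds es g \<and> over ds tt g f"
    using gc ga gb ov unfolding nec_hom_def by blast
next
  fix ds f g g' m X
  assume A: "nec_obj (wedge ns) a b ds f"
    "nec_hom ds es g \<and> over ds tt g f \<and> nec_hom ds es g' \<and> over ds tt g' f"
    and XC: "X \<in> cells (wedge ds) m"
  have gds: "gl ds" using A necklace_gl unfolding nec_obj_def by auto
  have gc: "cmap (wedge ds) (wedge es) g" "cmap (wedge ds) (wedge es) g'" using A unfolding nec_hom_def by auto
  obtain k h where kh: "k < length ds" "box_hom m (ds ! k) h" "X = bcell ds m k h"
    using XC by (auto simp: cells_wedge)
  have tc: "topcell ds k \<in> cells (wedge ds) (ds ! k)" using topcell_cell[OF kh(1)] .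
  have "g (ds ! k) (topcell ds k) = g' (ds ! k) (topcell ds k)"
  proof (rule t_inj)
    show "g (ds ! k) (topcell ds k) \<in> cells (wedge es) (ds ! k)" using cmap_cells[OF gc(1) tc] .
    show "g' (ds ! k) (topcell ds k) \<in> cells (wedge es) (ds ! k)" using cmap_cells[OF gc(2) tc] .
    show "tt (ds ! k) (g (ds ! k) (topcell ds k)) = tt (ds ! k) (g' (ds ! k) (topcell ds k))"
      using A(2) tc unfolding over_def by simp
  qed
  moreover have "X = act (wedge ds) m (ds ! k) h (topcell ds k)" using act_topcell[OF gds kh(2)] kh(3) by simp
  ultimately show "g m X = g' m X"
    using cmap_act[OF gc(1) kh(2) tc] cmap_act[OF gc(2) kh(2) tc] by simp
qed

end


lemma lex_sandwich:
  "lex (p, c) (k, w) \<Longrightarrow> lex (k, w) (q, d) \<Longrightarrow> p \<le> k \<and> k \<le> q \<and> (k = p \<longrightarrow> vle c w) \<and> (k = q \<longrightarrow> vle w d)"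
  unfolding lex_def by auto

lemma vertex_canon:
  assumes g: "gl ns" and x: "VV ns k w"
  obtains k' w' where "VV ns k' w'" "iscanon ns k' w'" "vtx ns k' w' = vtx ns k w" "canon ns k w = (k', w')"
  using canon_props[OF g x] by (metis prod.exhaust)

lemma case1:
  assumes N: "necklace ns" and A: "in_bead ns i a u" and B: "in_bead ns i b v" and uv: "vle u v"
  shows "nec_terminal (wedge ns) a b (ivl_es (\<lambda>_. u) (\<lambda>_. v) 0)
           (wmap (wedge ns) (ivl_es (\<lambda>_. u) (\<lambda>_. v) 0) (ivl_zs ns i (\<lambda>_. u) (\<lambda>_. v) 0))"
proof -
  have g: "gl ns" using N necklace_gl by blast
  have Vu: "VV ns i u" and a: "a = vtx ns i u" using A by (auto simp: in_bead_iff)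
  have Vv: "VV ns i v" and b: "b = vtx ns i v" using B by (auto simp: in_bead_iff)
  have I: "ivl ns i i (\<lambda>_. u) (\<lambda>_. v)"
    unfolding ivl_def using N Vu Vv uv by (auto simp: VV_def)
  have bt: "btw ns i i (\<lambda>_. u) (\<lambda>_. v) a b"
    unfolding btw_def
  proof (intro allI impI)
    fix x assume xx: "prec ns a x \<and> prec ns x b"
    obtain k w where kw: "VV ns k w" "x = vtx ns k w" using prec_vtx(2)[of ns a x] xx by blast
    obtain k' w' where c: "VV ns k' w'" "iscanon ns k' w'" "vtx ns k' w' = vtx ns k w" "canon ns k w = (k', w')"
      using vertex_canon[OF g kw(1)] by blast
    have l1: "lex (canon ns i u) (k', w')" using xx a kw prec_iff[OF g Vu kw(1)] c(4) by simp
    have l2: "lex (k', w') (canon ns i v)" using xx b kw prec_iff[OF g kw(1) Vv] c(4) by simp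
    have lu: "length u = ns ! i" "length v = ns ! i" "i < length ns" using Vu Vv by (auto simp: VV_def)
    have lw: "length w' = ns ! k'" "k' < length ns" using c(1) by (auto simp: VV_def)
    have "\<exists>w. VV ns i w \<and> x = vtx ns i w \<and> vle u w \<and> vle w v"
    proof (cases "u = top_v (ns ! i) \<and> Suc i < length ns")
      case True
      then have vt: "v = top_v (ns ! i)" using uv vle_from_top by auto
      have "canon ns i u = (Suc i, bot_v (ns ! Suc i))" "canon ns i v = (Suc i, bot_v (ns ! Suc i))"
        using True vt by (auto simp: canon_def)
      then have "k' = Suc i" "w' = bot_v (ns ! Suc i)" using lex_sandwich l1 l2 vle_to_bot vle_antisym
        by (metis le_antisym)+
      then have "x = vtx ns i (top_v (ns ! i))" using kw c(3) True vtx_eq_iff[OF g] by metis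
      then show ?thesis using True vt Vu by auto
    next
      case False
      then have cu: "canon ns i u = (i, u)" by (simp add: canon_def)
      show ?thesis
      proof (cases "v = top_v (ns ! i) \<and> Suc i < length ns")
        case True
        then have cv: "canon ns i v = (Suc i, bot_v (ns ! Suc i))" by (simp add: canon_def)
        from lex_sandwich[OF l1[unfolded cu] l2[unfolded cv]]
        have "(k' = i \<and> vle u w') \<or> (k' = Suc i \<and> w' = bot_v (ns ! Suc i))"
          using vle_to_bot by (metis le_SucE le_antisym)
        then show ?thesis
        proof
          assume "k' = i \<and> vle u w'"
          then show ?thesis using c kw True lw by (auto simp: vle_top)
        next
          assume "k' = Suc i \<and> w' = bot_v (ns ! Suc i)"
          then have "x = vtx ns i (top_v (ns ! i))" using kw c(3) True vtx_eq_iff[OF g] by metis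
          then show ?thesis using True Vu uv by (intro exI[of _ "top_v (ns ! i)"]) (auto simp: VV_def)
        qed
      next
        case False
        then have cv: "canon ns i v = (i, v)" by (simp add: canon_def)
        from lex_sandwich[OF l1[unfolded cu] l2[unfolded cv]]
        have "k' = i" "vle u w'" "vle w' v" by auto
        then show ?thesis using c kw by auto
      qed
    qed
    then show "\<exists>p\<le>i - i. \<exists>w. VV ns (i + p) w \<and> x = vtx ns (i + p) w \<and> vle u w \<and> vle w v" by auto
  qed
  from ivl_terminal[OF I _ _ bt] a b show ?thesis by simp
qed

lemma case2:
  assumes N: "necklace ns" and P: "prec ns a b"
    and nC: "\<not> (\<exists>i u v. in_bead ns i a u \<and> in_bead ns i b v \<and> vle u v)"
  shows "nec_terminal (wedge ns) a b (sub_dims ns a b) (sub_iota ns a b)"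
proof -
  have g: "gl ns" using N necklace_gl by blast
  obtain ia ua where ia: "VV ns ia ua" "a = vtx ns ia ua" using prec_vtx(1)[OF P] by blast
  obtain ib ub where ib: "VV ns ib ub" "b = vtx ns ib ub" using prec_vtx(2)[OF P] by blast
  obtain pa ca where ca: "VV ns pa ca" "iscanon ns pa ca" "vtx ns pa ca = a"
    using vertex_canon[OF g ia(1)] ia(2) by metis
  obtain pb cb where cb: "VV ns pb cb" "iscanon ns pb cb" "vtx ns pb cb = b"
    using vertex_canon[OF g ib(1)] ib(2) by metis
  have Ba: "\<And>k w. in_bead ns k a w \<longleftrightarrow> (k = pa \<and> w = ca) \<or> (Suc k = pa \<and> ca = bot_v (ns ! pa) \<and> w = top_v (ns ! k))"
    using canon_beads[OF g ca(1,2)] ca(3) by simp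
  have Bb: "\<And>k w. in_bead ns k b w \<longleftrightarrow> (k = pb \<and> w = cb) \<or> (Suc k = pb \<and> cb = bot_v (ns ! pb) \<and> w = top_v (ns ! k))"
    using canon_beads[OF g cb(1,2)] cb(3) by simp
  have lab: "lex (pa, ca) (pb, cb)" using prec_canon[OF g ca(1) cb(1) ca(2) cb(2)] P ca(3) cb(3) by simp
  have lens: "pa < length ns" "length ca = ns ! pa" "pb < length ns" "length cb = ns ! pb"
    using ca(1) cb(1) by (auto simp: VV_def)
  define j0 where "j0 = (if cb = bot_v (ns ! pb) \<and> 0 < pb then pb - 1 else pb)"
  define v0 where "v0 = (if cb = bot_v (ns ! pb) \<and> 0 < pb then top_v (ns ! (pb - 1)) else cb)"
  have GI: "(GREATEST i. \<exists>u. in_bead ns i a u) = pa"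
    by (rule Greatest_equality) (auto simp: Ba)
  have TU: "(THE u. in_bead ns pa a u) = ca"
    by (rule the_equality) (auto simp: Ba)
  have bj0: "in_bead ns j0 b v0" unfolding j0_def v0_def Bb by auto
  have LJ: "(LEAST j. \<exists>v. in_bead ns j b v) = j0"
    by (rule Least_equality) (use bj0 in \<open>auto simp: Bb j0_def\<close>)
  have TV: "(THE v. in_bead ns j0 b v) = v0"
    by (rule the_equality) (use bj0 in \<open>auto simp: Bb j0_def v0_def\<close>)
  have papb: "pa < pb"
  proof -
    have "\<not> (pa = pb \<and> vle ca cb)"
      using nC Ba Bb by blast
    then show ?thesis using lab by (auto simp: lex_def)
  qed
  have ij: "pa < j0"
  proof (cases "cb = bot_v (ns ! pb) \<and> 0 < pb")
    case True
    then have j: "j0 = pb - 1" by (simp add: j0_def)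
    show ?thesis
    proof (rule ccontr)
      assume "\<not> pa < j0"
      then have "pa = pb - 1" using j papb by simp
      then have "in_bead ns pa a ca" "in_bead ns pa b (top_v (ns ! pa))" "vle ca (top_v (ns ! pa))"
        using Ba Bb True papb lens by (auto simp: vle_top)
      then show False using nC by blast
    qed
  next
    case False
    then show ?thesis using papb by (simp add: j0_def)
  qed
  have j0l: "j0 < length ns" "j0 \<le> pb" using lens by (auto simp: j0_def)
  have len2: "\<And>k. k < length ns \<Longrightarrow> 0 < ns ! k"
    using N ij j0l unfolding necklace_def by (auto simp: nth_mem)
  have cat: "ca \<noteq> top_v (ns ! pa)" using ca(2) ij j0l by (auto simp: iscanon_def)
  have v0l: "length v0 = ns ! j0" using lens by (auto simp: v0_def j0_def)
  have v0b: "v0 \<noteq> bot_v (ns ! j0)"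
  proof (cases "cb = bot_v (ns ! pb) \<and> 0 < pb")
    case True
    then show ?thesis using top_ne_bot[OF len2[of "pb - 1"]] lens by (simp add: v0_def j0_def)
  next
    case False
    then have "cb \<noteq> bot_v (ns ! pb)" using papb by auto
    then show ?thesis using False by (simp add: v0_def j0_def)
  qed
  define dn where "dn = j0 - pa"
  define L where "L p = (if p = 0 then ca else bot_v (ns ! (pa + p)))" for p
  define U where "U p = (if p = dn then v0 else top_v (ns ! (pa + p)))" for p
  have nnp: "0 < dn" "pa + dn = j0" using ij by (auto simp: dn_def)
  have I: "ivl ns pa j0 L U"
    unfolding ivl_def dn_def[symmetric]
  proof (intro conjI allI impI)
    fix p assume p: "p \<le> dn"
    show "length (L p) = ns ! (pa + p)" using lens by (simp add: L_def)
    show "length (U p) = ns ! (pa + p)" using v0l nnp by (simp add: U_def)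
    show "vle (L p) (U p)" using lens v0l nnp by (auto simp: L_def U_def vle_top vle_bot)
  next
    fix p assume "0 < p \<and> p \<le> dn" then show "L p = bot_v (ns ! (pa + p))" by (simp add: L_def)
  next
    fix p assume "p < dn" then show "U p = top_v (ns ! (pa + p))" by (simp add: U_def)
  next
    assume "pa < j0"
    show "L 0 \<noteq> U 0" using nnp cat by (simp add: L_def U_def)
    show "L dn \<noteq> U dn" using nnp v0b by (simp add: L_def U_def)
  qed (use N ij j0l in auto)
  have sd: "sub_data ns a b = (vdist ca (top_v (ns ! pa)), bcell ns (vdist ca (top_v (ns ! pa))) pa (iota ca (top_v (ns ! pa))))
           # map (\<lambda>l. (ns ! l, bcell ns (ns ! l) l (hext (ns ! l) id))) [Suc pa..<j0]
           @ [(vdist (bot_v (ns ! j0)) v0, bcell ns (vdist (bot_v (ns ! j0)) v0) j0 (iota (bot_v (ns ! j0)) v0))]"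
    unfolding sub_data_def if_not_P[OF nC] Let_def GI TU LJ TV ..
  have sd2: "sub_data ns a b = map (\<lambda>p. (vdist (L p) (U p), bcell ns (vdist (L p) (U p)) (pa + p) (iota (L p) (U p)))) [0..<Suc dn]"
  proof (rule nth_equalityI)
    show "length (sub_data ns a b) = length (map (\<lambda>p. (vdist (L p) (U p), bcell ns (vdist (L p) (U p)) (pa + p) (iota (L p) (U p)))) [0..<Suc dn])"
      unfolding sd using nnp by simp
  next
    fix p assume "p < length (sub_data ns a b)"
    then have p: "p \<le> dn" unfolding sd using nnp by simp
    show "sub_data ns a b ! p = map (\<lambda>p. (vdist (L p) (U p), bcell ns (vdist (L p) (U p)) (pa + p) (iota (L p) (U p)))) [0..<Suc dn] ! p"
    proof -
      have r: "map (\<lambda>p. (vdist (L p) (U p), bcell ns (vdist (L p) (U p)) (pa + p) (iota (L p) (U p)))) [0..<Suc dn] ! p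
          = (vdist (L p) (U p), bcell ns (vdist (L p) (U p)) (pa + p) (iota (L p) (U p)))"
        using p by (simp del: upt_Suc add: nth_map_upt)
      show ?thesis
      proof (cases "p = 0")
        case True
        then show ?thesis unfolding r sd using nnp by (simp add: L_def U_def)
      next
        case False
        show ?thesis
        proof (cases "p = dn")
          case True
          have lm: "j0 - Suc pa = dn - 1" using nnp by (simp add: dn_def)
          have "sub_data ns a b ! p = (vdist (bot_v (ns ! j0)) v0, bcell ns (vdist (bot_v (ns ! j0)) v0) j0 (iota (bot_v (ns ! j0)) v0))"
            unfolding sd using True nnp lm \<open>p \<noteq> 0\<close> by (simp add: nth_Cons' nth_append)
          then show ?thesis unfolding r using nnp True \<open>p \<noteq> 0\<close>
            by (simp add: L_def U_def)
        next
          case False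
          then have pp: "0 < p" "p < dn" using p \<open>p \<noteq> 0\<close> by auto
          then have "sub_data ns a b ! p = (ns ! (pa + p), bcell ns (ns ! (pa + p)) (pa + p) (hext (ns ! (pa + p)) id))"
          proof -
            have q: "p - 1 < j0 - Suc pa" "Suc pa + (p - 1) = pa + p" using pp by (auto simp: dn_def)
            show ?thesis unfolding sd using pp q by (simp add: nth_append nth_Cons')
          qed
          then show ?thesis unfolding r using pp
            by (simp add: L_def U_def vdist_bot_top iota_bot_top)
        qed
      qed
    qed
  qed
  have sdims: "sub_dims ns a b = ivl_es L U dn"
    unfolding sub_dims_def sd2 ivl_es_def by simp
  have sio: "sub_iota ns a b = wmap (wedge ns) (ivl_es L U dn) (ivl_zs ns pa L U dn)"
    unfolding sub_iota_def sdims unfolding sd2 ivl_zs_def by (simp add: comp_def del: upt_Suc)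
  have aL: "a = vtx ns pa (L 0)" using ca(3) by (simp add: L_def)
  have bU: "b = vtx ns j0 (U (j0 - pa))"
  proof (cases "cb = bot_v (ns ! pb) \<and> 0 < pb")
    case True
    then have "vtx ns j0 v0 = vtx ns pb cb" using lens
      by (simp add: j0_def v0_def vtx_eq_iff[OF g])
    then show ?thesis using cb(3) by (simp add: U_def dn_def)
  next
    case False
    then have "j0 = pb" "v0 = cb" unfolding j0_def v0_def by (simp_all only: if_False if_not_P[OF False])
    moreover have "U (j0 - pa) = v0" by (simp add: U_def dn_def)
    ultimately show ?thesis using cb(3) by simp
  qed
  have bt: "btw ns pa j0 L U a b"
    unfolding btw_def dn_def[symmetric]
  proof (intro allI impI)
    fix x assume xx: "prec ns a x \<and> prec ns x b"
    obtain k w where kw: "VV ns k w" "x = vtx ns k w" using prec_vtx(2)[of ns a x] xx by blast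
    obtain k' w' where c: "VV ns k' w'" "iscanon ns k' w'" "vtx ns k' w' = vtx ns k w"
      using vertex_canon[OF g kw(1)] by blast
    have l1: "lex (pa, ca) (k', w')" using xx ca kw c prec_canon[OF g ca(1) c(1) ca(2) c(2)] by simp
    have l2: "lex (k', w') (pb, cb)" using xx cb kw c prec_canon[OF g c(1) cb(1) c(2) cb(2)] by simp
    note sw = lex_sandwich[OF l1 l2]
    have lw: "length w' = ns ! k'" "k' < length ns" using c(1) by (auto simp: VV_def)
    show "\<exists>p\<le>dn. \<exists>w. VV ns (pa + p) w \<and> x = vtx ns (pa + p) w \<and> vle (L p) w \<and> vle w (U p)"
    proof (cases "k' \<le> j0")
      case True
      define p where "p = k' - pa"
      have pk: "k' = pa + p" "p \<le> dn" using sw True by (auto simp: p_def dn_def)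
      have lo: "vle (L p) w'"
        using sw pk lw by (auto simp: L_def vle_bot)
      have hi: "vle w' (U p)"
      proof (cases "p = dn")
        case True
        then have "k' = j0" using pk nnp by simp
        then show ?thesis using sw True lw j0l
          by (auto simp: U_def v0_def j0_def vle_top split: if_splits)
      next
        case False
        then show ?thesis using lw pk by (simp add: U_def vle_top)
      qed
      show ?thesis using pk lo hi c kw by (intro exI[of _ p] exI[of _ w']) auto
    next
      case False
      then have e: "k' = pb" "cb = bot_v (ns ! pb)" "0 < pb" "j0 = pb - 1"
        using sw j0l by (auto simp: j0_def split: if_splits)
      then have "w' = bot_v (ns ! pb)" using sw vle_to_bot by auto
      then have x1: "x = vtx ns pb (bot_v (ns ! pb))" using e c(3) kw(2) by simp
      have sj: "Suc j0 = pb" using e by simp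
      have "vtx ns j0 (top_v (ns ! j0)) = vtx ns (Suc j0) (bot_v (ns ! Suc j0))"
        unfolding vtx_eq_iff[OF g] using sj lens by simp
      then have "x = vtx ns j0 (top_v (ns ! j0))" using x1 sj by simp
      moreover have "U dn = top_v (ns ! j0)" using e by (simp add: U_def v0_def)
      ultimately have "VV ns (pa + dn) (top_v (ns ! j0)) \<and> x = vtx ns (pa + dn) (top_v (ns ! j0)) \<and>
          vle (L dn) (top_v (ns ! j0)) \<and> vle (top_v (ns ! j0)) (U dn)"
        using nnp j0l lens by (auto simp: VV_def L_def vle_bot)
      then show ?thesis by blast
    qed
  qed
  have "nec_terminal (wedge ns) a b (ivl_es L U (j0 - pa)) (wmap (wedge ns) (ivl_es L U (j0 - pa)) (ivl_zs ns pa L U (j0 - pa)))"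
    by (rule ivl_terminal[OF I aL bU bt])
  then show ?thesis using sdims sio by (simp add: dn_def)
qed

theorem proposition2p8:
  fixes ns :: "nat list" and a b :: ncell
  assumes "necklace ns" and "prec ns a b"
  shows "nec_terminal (wedge ns) a b (sub_dims ns a b) (sub_iota ns a b)"
proof (cases "\<exists>i u v. in_bead ns i a u \<and> in_bead ns i b v \<and> vle u v")
  case True
  define S where "S = (SOME (i, u, v). in_bead ns i a u \<and> in_bead ns i b v \<and> vle u v)"
  have ex: "\<exists>t. (\<lambda>(i, u, v). in_bead ns i a u \<and> in_bead ns i b v \<and> vle u v) t"
    using True by auto
  have PS: "(\<lambda>(i, u, v). in_bead ns i a u \<and> in_bead ns i b v \<and> vle u v) S"
    unfolding S_def by (rule someI_ex[OF ex])
  obtain i u v where S: "S = (i, u, v)" by (cases S) auto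
  have P: "in_bead ns i a u" "in_bead ns i b v" "vle u v" using PS S by auto
  have sd: "sub_data ns a b = [(vdist u v, bcell ns (vdist u v) i (iota u v))]"
    unfolding sub_data_def if_P[OF True] S_def[symmetric] S by simp
  have e1: "sub_dims ns a b = ivl_es (\<lambda>_. u) (\<lambda>_. v) 0"
    unfolding sub_dims_def sd ivl_es_def by simp
  have e2: "sub_iota ns a b = wmap (wedge ns) (ivl_es (\<lambda>_. u) (\<lambda>_. v) 0) (ivl_zs ns i (\<lambda>_. u) (\<lambda>_. v) 0)"
    unfolding sub_iota_def e1 unfolding sd ivl_zs_def by simp
  show ?thesis unfolding e1 e2 by (rule case1[OF assms(1) P])
next
  case False
  then show ?thesis using case2[OF assms] by blast
qed


end
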